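(* Assume the corruption model described in the context, let $\delta\in[0,1]$, and suppose $n\ge K\cdot\frac{d+\log\delta^{-1}}{(\epsilon\log\epsilon^{-1})^2}$ for a sufficiently large absolute constant $K$. Then, for a suitable universal constant $C_4$, with probability at least $1-\frac\delta2$ both of the following hold: (i) $C_4\,\epsilon\log\epsilon^{-1}\,\Sigma\succeq\frac1n\sum_{i\in G'}X_iX_i^\top-\Sigma\succeq-C_4\,\epsilon\log\epsilon^{-1}\,\Sigma$; (ii) for all $w\in\mathfrak{S}^n_{1-\epsilon}$, $C_4\log\epsilon^{-1}\,\Sigma\succeq\sum_{i\in G'}w_i(X_iX_i^\top-\Sigma)\succeq-C_4\log\epsilon^{-1}\,\Sigma$.
   Context: Corruption model: $\mathcal{D}$ is mean-zero on $\mathbb{R}^d$ with covariance $\Sigma$ and sub-Gaussian proxy $\Gamma\preceq c\Sigma$ for a constant $c$ (i.e., $\mathbb{E}[\exp(tX^\top v)]\le\exp(t^2v^\top\Gamma v/2)$ for all unit $v$, $t\in\mathbb{R}$); $\{X_i\}_{i\in G'}$, $|G'|=n$, are i.i.d. samples from $\mathcal{D}$, and $\epsilon$ is the corruption fraction. For $\beta\in[0,1)$, $\mathfrak{S}^n_\beta = \{w\in\mathbb{R}^n_{\ge0}:\|w\|_1=1,\ w_i\le\frac{1}{n(1-\beta)}\ \forall i\}$ (so $\mathfrak{S}^n_{1-\epsilon}$ has the cap $\frac{1}{n\epsilon}$), coordinates indexed by $G'$; $\succeq$ is the Loewner order. *)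

theory Defs
  imports "HOL-Probability.Probability"
begin

text \<open>Vectors in R^d are functions nat => real (coordinates j < d);
  d x d matrices are functions nat => nat => real (entries j,k < d).\<close>

definition quad_form :: "nat \<Rightarrow> (nat \<Rightarrow> nat \<Rightarrow> real) \<Rightarrow> (nat \<Rightarrow> real) \<Rightarrow> real" where
  "quad_form d A v = (\<Sum>j<d. \<Sum>k<d. v j * A j k * v k)"

definition loewner_le :: "nat \<Rightarrow> (nat \<Rightarrow> nat \<Rightarrow> real) \<Rightarrow> (nat \<Rightarrow> nat \<Rightarrow> real) \<Rightarrow> bool" where
  "loewner_le d A B \<longleftrightarrow> (\<forall>v. 0 \<le> quad_form d (\<lambda>j k. B j k - A j k) v)"

definition weight_set :: "nat \<Rightarrow> real \<Rightarrow> (nat \<Rightarrow> real) set" where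
  "weight_set n \<beta> = {w. (\<forall>i<n. 0 \<le> w i \<and> w i \<le> 1 / (real n * (1 - \<beta>))) \<and> (\<Sum>i<n. w i) = 1}"

definition subgauss_model ::
  "real \<Rightarrow> nat \<Rightarrow> (nat \<Rightarrow> real) measure \<Rightarrow> (nat \<Rightarrow> nat \<Rightarrow> real) \<Rightarrow> (nat \<Rightarrow> nat \<Rightarrow> real) \<Rightarrow> bool" where
  "subgauss_model c d D \<Sigma> \<Gamma> \<longleftrightarrow>
     prob_space D \<and>
     sets D = sets (\<Pi>\<^sub>M j\<in>{..<d}. lborel) \<and>
     (\<forall>j<d. integrable D (\<lambda>x. x j) \<and> (\<integral>x. x j \<partial>D) = 0) \<and>
     (\<forall>j<d. \<forall>k<d. integrable D (\<lambda>x. x j * x k) \<and> \<Sigma> j k = (\<integral>x. x j * x k \<partial>D)) \<and>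
     (\<forall>v t. (\<Sum>j<d. (v j)\<^sup>2) = 1 \<longrightarrow>
        (\<integral>\<^sup>+x. ennreal (exp (t * (\<Sum>j<d. x j * v j))) \<partial>D)
          \<le> ennreal (exp (t\<^sup>2 * quad_form d \<Gamma> v / 2))) \<and>
     loewner_le d \<Gamma> (\<lambda>j k. c * \<Sigma> j k)"

end

theory Submission
  imports Defs
begin

definition dotp :: "nat \<Rightarrow> (nat \<Rightarrow> real) \<Rightarrow> (nat \<Rightarrow> real) \<Rightarrow> real" where
  "dotp d a x = (\<Sum>j<d. a j * x j)"

definition bil :: "nat \<Rightarrow> (nat \<Rightarrow> nat \<Rightarrow> real) \<Rightarrow> (nat \<Rightarrow> real) \<Rightarrow> (nat \<Rightarrow> real) \<Rightarrow> real" where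
  "bil d S a b = (\<Sum>j<d. \<Sum>k<d. a j * S j k * b k)"

definition ev :: "nat \<Rightarrow> nat \<Rightarrow> real" where "ev j = (\<lambda>i. if i = j then 1 else 0)"

lemma quad_form_bil: "quad_form d S v = bil d S v v"
  by (simp add: quad_form_def bil_def)

lemma bil_alt: "bil d S a b = (\<Sum>j<d. a j * (\<Sum>k<d. S j k * b k))"
  unfolding bil_def by (simp add: sum_distrib_left mult.assoc)

lemma bil_alt2: "bil d S a b = (\<Sum>k<d. (\<Sum>j<d. a j * S j k) * b k)"
  unfolding bil_def by (subst sum.swap) (simp add: sum_distrib_right)

lemma bil_ev: assumes "j < d" shows "bil d S (ev j) y = (\<Sum>k<d. S j k * y k)"
proof -
  have "bil d S (ev j) y = (\<Sum>i<d. if i = j then (\<Sum>k<d. S i k * y k) else 0)"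
    unfolding bil_alt ev_def by (intro sum.cong) auto
  also have "\<dots> = (\<Sum>k<d. S j k * y k)" using \<open>j < d\<close> by (simp add: sum.delta)
  finally show ?thesis .
qed

lemma bil_expand_left: "bil d S a y = (\<Sum>j<d. a j * bil d S (ev j) y)"
  unfolding bil_alt[of d S a y] by (intro sum.cong refl) (simp add: bil_ev)

lemma bil_add_left: "bil d S (\<lambda>i. a i + b i) y = bil d S a y + bil d S b y"
  unfolding bil_alt by (simp add: algebra_simps sum.distrib)

lemma bil_diff_left: "bil d S (\<lambda>i. a i - b i) y = bil d S a y - bil d S b y"
  unfolding bil_alt by (simp add: algebra_simps sum_subtractf)

lemma bil_scale_left: "bil d S (\<lambda>i. t * a i) y = t * bil d S a y"
  unfolding bil_alt by (simp add: algebra_simps sum_distrib_left)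

lemma bil_sum_left: "bil d S (\<lambda>i. \<Sum>l\<in>L. f l i) y = (\<Sum>l\<in>L. bil d S (f l) y)"
  unfolding bil_alt by (simp add: sum_distrib_right sum_distrib_left mult.assoc sum.swap[of _ L])

lemma bil_add_right: "bil d S y (\<lambda>i. a i + b i) = bil d S y a + bil d S y b"
  unfolding bil_alt2 by (simp add: algebra_simps sum.distrib)

lemma bil_diff_right: "bil d S y (\<lambda>i. a i - b i) = bil d S y a - bil d S y b"
  unfolding bil_alt2 by (simp add: algebra_simps sum_subtractf)

lemma bil_scale_right: "bil d S y (\<lambda>i. t * a i) = t * bil d S y a"
  unfolding bil_alt2 by (simp add: algebra_simps sum_distrib_left)

lemma bil_sum_right: "bil d S y (\<lambda>i. \<Sum>l\<in>L. f l i) = (\<Sum>l\<in>L. bil d S y (f l))"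
  unfolding bil_alt2 by (simp add: sum_distrib_right sum_distrib_left mult.assoc sum.swap[of _ L])

lemma bil_sym: "(\<And>j k. S j k = S k j) \<Longrightarrow> bil d S a b = bil d S b a"
  unfolding bil_def by (subst sum.swap) (simp add: mult.commute mult.left_commute)

lemma bil_zero_left[simp]: "bil d S (\<lambda>i. 0) y = 0"
  by (simp add: bil_def)

lemma bil_kernel:
  assumes sym: "\<And>j k. S j k = S k j" and psd: "\<And>v. 0 \<le> bil d S v v"
    and k0: "bil d S k k = 0"
  shows "bil d S k y = 0"
proof (rule ccontr)
  assume ne: "bil d S k y \<noteq> 0"
  define b where "b = bil d S k y"
  define Q where "Q = bil d S y y"
  have Q: "Q \<ge> 0" using psd unfolding Q_def .
  define t where "t = - b / (Q + 1)"
  have "0 \<le> bil d S (\<lambda>i. k i + t * y i) (\<lambda>i. k i + t * y i)" by (rule psd)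
  also have "\<dots> = 2 * t * b + t^2 * Q"
    unfolding bil_add_left bil_add_right bil_scale_left bil_scale_right k0 b_def Q_def
    using bil_sym[OF sym, where a=k and b=y] by (simp add: power2_eq_square algebra_simps)
  finally have h: "0 \<le> 2 * t * b + t^2 * Q" .
  have p: "Q + 1 > 0" using Q by linarith
  have e1: "t^2 * (Q+1) = b^2/(Q+1)" unfolding t_def using p by (simp add: power_divide power2_eq_square)
  have e2: "2 * t * b = - 2 * (b^2/(Q+1))" unfolding t_def using p by (simp add: field_simps power2_eq_square)
  have "t^2 * Q \<le> t^2 * (Q+1)" by (simp add: mult_left_mono)
  moreover have "b^2/(Q+1) > 0" using ne p unfolding b_def by simp
  ultimately have "2 * t * b + t^2 * Q < 0" using e1 e2 by linarith
  then show False using h by simp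
qed


lemma gram_schmidt:
  assumes sym: "\<And>j k. S j k = S k j" and psd: "\<And>v. 0 \<le> bil d S v v"
  shows "m \<le> d \<Longrightarrow> \<exists>r b. r \<le> m \<and> (\<forall>l<r. \<forall>l'<r. bil d S (b l) (b l') = (if l = l' then 1 else 0)) \<and>
     (\<forall>j<m. \<forall>y. bil d S (ev j) y = (\<Sum>l<r. bil d S (ev j) (b l) * bil d S (b l) y))"
proof (induction m)
  case 0
  show ?case by (rule exI[of _ 0]) auto
next
  case (Suc m)
  then obtain r b where r: "r \<le> m" and orth: "\<forall>l<r. \<forall>l'<r. bil d S (b l) (b l') = (if l = l' then 1 else 0)"
    and res: "\<forall>j<m. \<forall>y. bil d S (ev j) y = (\<Sum>l<r. bil d S (ev j) (b l) * bil d S (b l) y)" by auto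
  have symb: "bil d S x y = bil d S y x" for x y by (rule bil_sym[OF sym])
  define cf where "cf l = bil d S (ev m) (b l)" for l
  define w where "w = (\<lambda>i. ev m i - (\<Sum>l<r. cf l * b l i))"
  have wy: "bil d S w y = bil d S (ev m) y - (\<Sum>l<r. cf l * bil d S (b l) y)" for y
    unfolding w_def bil_diff_left bil_sum_left bil_scale_left ..
  have wb: "bil d S w (b l') = 0" if "l' < r" for l'
  proof -
    have "(\<Sum>l<r. cf l * bil d S (b l) (b l')) = (\<Sum>l<r. if l = l' then cf l else 0)"
      using orth that by (intro sum.cong) auto
    also have "\<dots> = cf l'" using that by (simp add: sum.delta)
    finally show ?thesis unfolding wy cf_def by simp
  qed
  have evm: "ev m = (\<lambda>i. w i + (\<Sum>l<r. cf l * b l i))" unfolding w_def by auto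
  define q where "q = bil d S w w"
  have q0: "q \<ge> 0" unfolding q_def by (rule psd)
  show ?case
  proof (cases "q = 0")
    case True
    have k: "bil d S w y = 0" for y using bil_kernel[OF sym psd] True unfolding q_def by blast
    show ?thesis
    proof (intro exI conjI)
      show "r \<le> Suc m" using r by simp
      show "\<forall>l<r. \<forall>l'<r. bil d S (b l) (b l') = (if l = l' then 1 else 0)" by fact
      show "\<forall>j<Suc m. \<forall>y. bil d S (ev j) y = (\<Sum>l<r. bil d S (ev j) (b l) * bil d S (b l) y)"
      proof (intro allI impI)
        fix j y assume "j < Suc m"
        then consider "j < m" | "j = m" by linarith
        then show "bil d S (ev j) y = (\<Sum>l<r. bil d S (ev j) (b l) * bil d S (b l) y)"
        proof cases
          case 1 then show ?thesis using res by blast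
        next
          case 2 then show ?thesis using k[of y] unfolding wy cf_def by simp
        qed
      qed
    qed
  next
    case False
    then have qp: "q > 0" using q0 by simp
    define sq where "sq = sqrt q"
    have sqp: "sq > 0" unfolding sq_def using qp by simp
    have sqsq: "sq * sq = q" unfolding sq_def using q0 by simp
    define nb where "nb = (\<lambda>i. (1 / sq) * w i)"
    define b' where "b' = b(r := nb)"
    have nby: "bil d S nb y = bil d S w y / sq" for y unfolding nb_def bil_scale_left by simp
    have nbb: "bil d S nb (b l) = 0" if "l < r" for l using nby wb that by simp
    have nbnb: "bil d S nb nb = 1"
      unfolding nby using sqp sqsq qp unfolding nb_def bil_scale_right q_def[symmetric] by (simp add: field_simps)
    show ?thesis
    proof (intro exI conjI)
      show "Suc r \<le> Suc m" using r by simp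
      show "\<forall>l<Suc r. \<forall>l'<Suc r. bil d S (b' l) (b' l') = (if l = l' then 1 else 0)"
      proof (intro allI impI)
        fix l l' assume l: "l < Suc r" and l': "l' < Suc r"
        show "bil d S (b' l) (b' l') = (if l = l' then 1 else 0)"
        proof (cases "l = r")
          case True
          then show ?thesis using l' nbb nbnb unfolding b'_def by (cases "l' = r") auto
        next
          case False
          then have lr: "l < r" using l by simp
          show ?thesis
          proof (cases "l' = r")
            case True
            have "bil d S (b l) nb = 0" using symb[of "b l" nb] nbb[OF lr] by simp
            then show ?thesis using True False unfolding b'_def by simp
          next
            case False
            then show ?thesis using \<open>l \<noteq> r\<close> lr l' orth unfolding b'_def by auto
          qed
        qed
      qed
      have sumsplit: "(\<Sum>l<Suc r. bil d S (ev j) (b' l) * bil d S (b' l) y) =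
          (\<Sum>l<r. bil d S (ev j) (b l) * bil d S (b l) y) + bil d S (ev j) nb * bil d S nb y" for j y
        unfolding b'_def by (simp add: lessThan_Suc)
      show "\<forall>j<Suc m. \<forall>y. bil d S (ev j) y = (\<Sum>l<Suc r. bil d S (ev j) (b' l) * bil d S (b' l) y)"
      proof (intro allI impI)
        fix j y assume "j < Suc m"
        then consider "j < m" | "j = m" by linarith
        then show "bil d S (ev j) y = (\<Sum>l<Suc r. bil d S (ev j) (b' l) * bil d S (b' l) y)"
        proof cases
          case 1
          have "bil d S (ev j) w = (\<Sum>l<r. bil d S (ev j) (b l) * bil d S (b l) w)" using res 1 by blast
          also have "\<dots> = 0" using wb symb by (intro sum.neutral) auto
          finally have "bil d S (ev j) nb = 0" unfolding nb_def bil_scale_right by simp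
          then show ?thesis unfolding sumsplit using res 1 by simp
        next
          case 2
          have "bil d S w (ev m) = q + (\<Sum>l<r. cf l * bil d S w (b l))"
            by (subst evm) (simp add: bil_add_right bil_sum_right bil_scale_right q_def)
          also have "\<dots> = q" using wb by simp
          finally have "bil d S (ev m) nb = q / sq" using symb unfolding nb_def bil_scale_right by simp
          then have "bil d S (ev m) nb = sq" using sqsq sqp by (metis nonzero_mult_div_cancel_left order_less_irrefl)
          then have "bil d S (ev m) nb * bil d S nb y = bil d S w y"
            unfolding nby using sqp by simp
          then show ?thesis unfolding sumsplit 2 wy cf_def by simp
        qed
      qed
    qed
  qed
qed


lemma exp_ge_partial_sum:
  fixes x :: real assumes "0 \<le> x"
  shows "(\<Sum>k<m. x^k / fact k) \<le> exp x"
proof -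
  have s: "(\<lambda>n. x^n / fact n) sums exp x" using exp_converges[of x] by (simp add: divide_inverse mult.commute)
  have "(\<Sum>k<m. x^k / fact k) \<le> suminf (\<lambda>n. x^n / fact n)"
    using s assms by (intro sum_le_suminf) (auto simp: sums_iff)
  then show ?thesis using s by (simp add: sums_iff)
qed

lemma exp_ge_term:
  fixes x :: real assumes "0 \<le> x"
  shows "x^k / fact k \<le> exp x"
proof -
  have "x^k / fact k \<le> (\<Sum>j<Suc k. x^j / fact j)"
    using assms by (intro member_le_sum) auto
  also have "\<dots> \<le> exp x" by (rule exp_ge_partial_sum[OF assms])
  finally show ?thesis .
qed

lemma exp_ge_quadratic:
  fixes x :: real assumes "0 \<le> x"
  shows "1 + x + x^2/2 \<le> exp x"
  using exp_ge_partial_sum[OF assms, of 3] by (simp add: numeral_3_eq_3 eval_nat_numeral)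

lemma exp_minus_le_quadratic:
  fixes x :: real assumes "0 \<le> x"
  shows "exp (-x) + x \<le> 1 + x^2/2"
proof -
  define f where "f y = 1 + y^2/2 - y - exp (-y)" for y :: real
  have deriv: "(f has_real_derivative (y - 1 + exp (-y))) (at y)" for y
    unfolding f_def by (auto intro!: derivative_eq_intros simp: power2_eq_square)
  have "f 0 \<le> f x"
  proof (rule DERIV_nonneg_imp_nondecreasing[OF assms])
    fix y assume "0 \<le> y" "y \<le> x"
    show "\<exists>yy. (f has_real_derivative yy) (at y) \<and> 0 \<le> yy"
      using exp_ge_add_one_self[of "-y"] by (intro exI[of _ "y - 1 + exp (-y)"]) (auto intro: deriv)
  qed
  then show ?thesis unfolding f_def by simp
qed

lemma fact_double_le: "fact (2*k) \<le> (fact k * (2 * real k)^k :: real)"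
proof -
  have "fact (2*k) div fact (2*k - k) \<le> (2*k)^k" by (rule fact_div_fact_le_pow) simp
  moreover have "fact k dvd (fact (2*k) :: nat)" by (rule fact_dvd) simp
  ultimately have "(fact (2*k) :: nat) \<le> fact k * (2*k)^k"
    by (metis diff_mult_distrib mult_2 mult_le_mono2 dvd_mult_div_cancel nat_mult_1 add_diff_cancel_left')
  then have "real (fact (2*k)) \<le> real (fact k * (2*k)^k)" by (simp only: of_nat_le_iff)
  then show ?thesis by simp
qed


locale sgm =
  fixes c :: real and d :: nat and D :: "(nat \<Rightarrow> real) measure" and Sig Gam :: "nat \<Rightarrow> nat \<Rightarrow> real"
  assumes sm: "subgauss_model c d D Sig Gam" and cpos: "c > 0"
begin

lemma PS: "prob_space D" using sm unfolding subgauss_model_def by blast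

lemma setsD: "sets D = sets (\<Pi>\<^sub>M j\<in>{..<d}. lborel)" using sm unfolding subgauss_model_def by blast

lemma meas_comp: assumes "j < d" shows "(\<lambda>x. x j) \<in> borel_measurable D"
proof -
  have "(\<lambda>x. x j) \<in> (\<Pi>\<^sub>M j\<in>{..<d}. lborel) \<rightarrow>\<^sub>M lborel"
    by (rule measurable_component_singleton) (use assms in simp)
  then show ?thesis by (subst measurable_cong_sets[OF setsD refl]) simp
qed

lemma meas_dot[measurable]: "dotp d a \<in> borel_measurable D"
proof -
  have "(\<lambda>x. \<Sum>j<d. a j * x j) \<in> borel_measurable D"
    by (intro borel_measurable_sum borel_measurable_times borel_measurable_const meas_comp) auto
  then show ?thesis unfolding dotp_def[abs_def] .
qed

lemma int_comp: "j < d \<Longrightarrow> k < d \<Longrightarrow> integrable D (\<lambda>x. x j * x k)"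
  using sm unfolding subgauss_model_def by blast

lemma Sig_eq: "j < d \<Longrightarrow> k < d \<Longrightarrow> Sig j k = (\<integral>x. x j * x k \<partial>D)"
  using sm unfolding subgauss_model_def by blast

lemma dot_prod_expand: "dotp d a x * dotp d b x = (\<Sum>j<d. \<Sum>k<d. a j * b k * (x j * x k))"
  unfolding dotp_def sum_product by (intro sum.cong refl) (simp add: algebra_simps)

lemma int_dot: "integrable D (\<lambda>x. dotp d a x * dotp d b x)"
  unfolding dot_prod_expand
  apply (rule Bochner_Integration.integrable_sum, rule Bochner_Integration.integrable_sum, rule integrable_mult_right, rule int_comp) by auto

lemma int_dot_eq: "(\<integral>x. dotp d a x * dotp d b x \<partial>D) = bil d Sig a b"
proof -
  have "(\<integral>x. dotp d a x * dotp d b x \<partial>D) = (\<Sum>j<d. \<Sum>k<d. a j * b k * (\<integral>x. x j * x k \<partial>D))"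
  proof -
    have i1: "integrable D (\<lambda>x. a j * b k * (x j * x k))" if "j < d" "k < d" for j k
      by (rule integrable_mult_right, rule int_comp) (use that in auto)
    have i2: "integrable D (\<lambda>x. \<Sum>k<d. a j * b k * (x j * x k))" if "j < d" for j
      by (rule Bochner_Integration.integrable_sum) (use i1 that in auto)
    show ?thesis unfolding dot_prod_expand
      apply (subst Bochner_Integration.integral_sum) using i2 apply blast
      apply (intro sum.cong refl)
      apply (subst Bochner_Integration.integral_sum) using i1 apply blast
      by (intro sum.cong refl) simp
  qed
  also have "\<dots> = bil d Sig a b" unfolding bil_def by (intro sum.cong refl) (simp add: Sig_eq)
  finally show ?thesis .
qed

lemma psd: "0 \<le> bil d Sig v v"
proof -
  have "0 \<le> (\<integral>x. dotp d v x * dotp d v x \<partial>D)" by (intro integral_nonneg_AE) auto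
  then show ?thesis using int_dot_eq by simp
qed

lemma Sig_sym: "j < d \<Longrightarrow> k < d \<Longrightarrow> Sig j k = Sig k j"
  using Sig_eq by (simp add: mult.commute)

lemma nn_sq: "(\<integral>\<^sup>+x. ennreal ((dotp d a x)^2) \<partial>D) = ennreal (bil d Sig a a)"
proof -
  have "(\<integral>\<^sup>+x. ennreal ((dotp d a x)^2) \<partial>D) = ennreal (\<integral>x. (dotp d a x)^2 \<partial>D)"
    using int_dot[of a a] by (intro nn_integral_eq_integral) (auto simp: power2_eq_square)
  then show ?thesis using int_dot_eq[of a a] by (simp add: power2_eq_square)
qed

lemma quad_cmp: "bil d Gam a a \<le> c * bil d Sig a a"
proof -
  have "loewner_le d Gam (\<lambda>j k. c * Sig j k)" using sm unfolding subgauss_model_def by blast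
  then have "0 \<le> quad_form d (\<lambda>j k. c * Sig j k - Gam j k) a" unfolding loewner_le_def by blast
  also have "quad_form d (\<lambda>j k. c * Sig j k - Gam j k) a = c * bil d Sig a a - bil d Gam a a"
    unfolding quad_form_def bil_def
    by (simp add: algebra_simps sum_subtractf sum_distrib_left)
  finally show ?thesis by simp
qed

lemma mgf_unit: "(\<Sum>j<d. (v j)\<^sup>2) = 1 \<Longrightarrow>
   (\<integral>\<^sup>+x. ennreal (exp (t * (\<Sum>j<d. x j * v j))) \<partial>D) \<le> ennreal (exp (t\<^sup>2 * quad_form d Gam v / 2))"
  using sm unfolding subgauss_model_def by blast

lemma mgf: "(\<integral>\<^sup>+x. ennreal (exp (t * dotp d a x)) \<partial>D) \<le> ennreal (exp (t^2 * c * bil d Sig a a / 2))"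
proof (cases "(\<Sum>j<d. (a j)\<^sup>2) = 0")
  case True
  then have "\<forall>j\<in>{..<d}. (a j)^2 = 0" by (subst sum_nonneg_eq_0_iff[symmetric]) auto
  then have "dotp d a x = 0" for x unfolding dotp_def by auto
  then have "(\<integral>\<^sup>+x. ennreal (exp (t * dotp d a x)) \<partial>D) = 1"
    using prob_space.emeasure_space_1[OF PS] by simp
  also have "\<dots> \<le> ennreal (exp (t^2 * c * bil d Sig a a / 2))"
    using psd[of a] cpos by simp
  finally show ?thesis .
next
  case False
  define r2 where "r2 = (\<Sum>j<d. (a j)\<^sup>2)"
  have r2p: "r2 > 0" using False unfolding r2_def by (metis less_eq_real_def sum_nonneg zero_le_power2)
  define \<rho> where "\<rho> = sqrt r2"
  have rp: "\<rho> > 0" unfolding \<rho>_def using r2p by simp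
  have rr: "\<rho> * \<rho> = r2" unfolding \<rho>_def using r2p by simp
  define v where "v j = a j / \<rho>" for j
  have "(\<Sum>j<d. (v j)\<^sup>2) = r2 / (\<rho> * \<rho>)"
    unfolding v_def r2_def by (simp add: power_divide sum_divide_distrib power2_eq_square)
  then have vn: "(\<Sum>j<d. (v j)\<^sup>2) = 1" using rr r2p by simp
  have e1: "(t * \<rho>) * (\<Sum>j<d. x j * v j) = t * dotp d a x" for x
    unfolding v_def dotp_def sum_distrib_left using rp by (intro sum.cong refl) (simp add: field_simps)
  have qv: "quad_form d Gam v = bil d Gam a a / (\<rho> * \<rho>)"
    unfolding quad_form_def bil_def v_def sum_divide_distrib by (intro sum.cong refl) (simp add: field_simps)
  have "(t * \<rho>)\<^sup>2 * quad_form d Gam v = t^2 * bil d Gam a a"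
    unfolding qv using rp by (simp add: field_simps power2_eq_square)
  then have "(\<integral>\<^sup>+x. ennreal (exp (t * dotp d a x)) \<partial>D) \<le> ennreal (exp (t^2 * bil d Gam a a / 2))"
    using mgf_unit[OF vn, of "t * \<rho>"] unfolding e1 by simp
  also have "\<dots> \<le> ennreal (exp (t^2 * c * bil d Sig a a / 2))"
    using quad_cmp[of a] by (intro ennreal_leI) (simp add: mult_left_mono mult.assoc)
  finally show ?thesis .
qed

end

context sgm begin

lemma moment:
  assumes sp: "bil d Sig a a > 0"
  shows "(\<integral>\<^sup>+x. ennreal ((dotp d a x)^(2*k)) \<partial>D) \<le> ennreal (2 * fact k * (exp 1 * c * bil d Sig a a)^k)"
proof (cases "k = 0")
  case True
  then show ?thesis using prob_space.emeasure_space_1[OF PS] by simp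
next
  case False
  define s where "s = bil d Sig a a"
  have csp: "c * s > 0" using sp cpos unfolding s_def by simp
  have cne: "c \<noteq> 0" and sne: "s \<noteq> 0" using sp cpos unfolding s_def by auto
  define t where "t = sqrt (2 * k / (c * s))"
  have tp: "t > 0" unfolding t_def using csp False by simp
  have tt: "t^2 = 2 * k / (c * s)" unfolding t_def using csp by simp
  define F where "F = fact (2*k) / t^(2*k)"
  have Fp: "F \<ge> 0" unfolding F_def using tp by simp
  have pw: "(y::real)^(2*k) \<le> F * (exp (t * y) + exp (- t * y))" for y
  proof -
    have "(t * \<bar>y\<bar>)^(2*k) / fact (2*k) \<le> exp (t * \<bar>y\<bar>)" using tp by (intro exp_ge_term) simp
    also have "\<dots> \<le> exp (t * y) + exp (- t * y)" by (cases "y \<ge> 0") auto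
    finally have "(t * \<bar>y\<bar>)^(2*k) \<le> fact (2*k) * (exp (t * y) + exp (- t * y))"
      by (simp add: divide_le_eq mult.commute)
    moreover have "(t * \<bar>y\<bar>)^(2*k) = t^(2*k) * y^(2*k)"
      by (simp add: power_mult_distrib power_even_abs)
    ultimately have "t^(2*k) * y^(2*k) \<le> fact (2*k) * (exp (t * y) + exp (- t * y))" by simp
    then show ?thesis unfolding F_def using tp by (simp add: field_simps)
  qed
  have "(\<integral>\<^sup>+x. ennreal ((dotp d a x)^(2*k)) \<partial>D) \<le>
        (\<integral>\<^sup>+x. ennreal F * (ennreal (exp (t * dotp d a x)) + ennreal (exp ((-t) * dotp d a x))) \<partial>D)"
    using pw Fp by (intro nn_integral_mono) (simp add: ennreal_mult[symmetric] ennreal_plus[symmetric] del: ennreal_plus)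
  also have "\<dots> = ennreal F * ((\<integral>\<^sup>+x. ennreal (exp (t * dotp d a x)) \<partial>D) + (\<integral>\<^sup>+x. ennreal (exp ((-t) * dotp d a x)) \<partial>D))"
    by (subst nn_integral_cmult) (auto simp: nn_integral_add)
  also have "\<dots> \<le> ennreal F * (ennreal (exp (t^2 * c * s / 2)) + ennreal (exp ((-t)^2 * c * s / 2)))"
    unfolding s_def by (intro mult_left_mono add_mono mgf) auto
  also have "t^2 * c * s / 2 = k" unfolding tt using cne sne by (simp add: field_simps)
  also have "(-t)^2 * c * s / 2 = k" using tt cne sne by (simp add: field_simps)
  finally have le1: "(\<integral>\<^sup>+x. ennreal ((dotp d a x)^(2*k)) \<partial>D) \<le> ennreal (F * (2 * exp k))"
    using Fp by (simp add: ennreal_mult[symmetric] ennreal_plus[symmetric] del: ennreal_plus)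
  have "F = fact (2*k) * (c * s)^k / (2 * k)^k"
    unfolding F_def power_mult[symmetric] using tt csp False
    by (simp add: power_mult power_divide)
  also have "\<dots> \<le> fact k * (2 * real k)^k * (c * s)^k / (2 * k)^k"
    using fact_double_le[of k] csp by (intro divide_right_mono mult_right_mono) auto
  also have "\<dots> = fact k * (c * s)^k" using False by simp
  finally have "F * (2 * exp k) \<le> fact k * (c * s)^k * (2 * exp k)" by (intro mult_right_mono) auto
  also have "\<dots> = 2 * fact k * (exp 1 * c * s)^k"
    by (simp add: exp_of_nat_mult[symmetric] power_mult_distrib mult_ac)
  finally show ?thesis using le1 unfolding s_def by (meson ennreal_leI order.trans)
qed

end

lemma exp_series_ennreal:
  fixes z :: real assumes "0 \<le> z"
  shows "ennreal (exp z) = (\<Sum>k. ennreal (z^k / fact k))"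
proof -
  have s: "(\<lambda>n. z^n / fact n) sums exp z" using exp_converges[of z] by (simp add: divide_inverse mult.commute)
  have "(\<Sum>k. ennreal (z^k / fact k)) = ennreal (\<Sum>k. z^k / fact k)"
    using s assms by (intro suminf_ennreal2) (auto simp: sums_iff)
  then show ?thesis using s by (simp add: sums_iff)
qed

lemma geo_bound:
  fixes q :: real assumes "0 \<le> q" "q \<le> 1/2"
  shows "2/(1-q) - 1 + x - 2*q \<le> 1 + x + 4*q^2"
proof -
  have "2/(1-q) \<le> 2 + 2*q + 4*q^2"
  proof -
    have "(1-q) * (2 + 2*q + 4*q^2) = 2 + 2 * q^2 - 4*q^3" by (simp add: algebra_simps power2_eq_square power3_eq_cube)
    also have "\<dots> \<ge> 2"
    proof -
      have "q*q*(2*q) \<le> q*q*1" using assms by (intro mult_left_mono) auto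
      then show ?thesis by (simp add: power2_eq_square power3_eq_cube)
    qed
    finally show ?thesis using assms by (simp add: divide_le_eq mult.commute)
  qed
  then show ?thesis by simp
qed

context sgm begin

lemma mgf_sq:
  assumes sp: "bil d Sig a a > 0" and lp: "0 \<le> l" and q: "l * exp 1 * c * bil d Sig a a \<le> 1/2"
  shows "(\<integral>\<^sup>+x. ennreal (exp (l * (dotp d a x)^2)) \<partial>D) \<le>
         ennreal (1 + l * bil d Sig a a + 4 * (l * exp 1 * c * bil d Sig a a)^2)"
proof -
  define s where "s = bil d Sig a a"
  define q where "q = l * exp 1 * c * s"
  have q0: "0 \<le> q" unfolding q_def s_def using lp cpos sp by simp
  have q1: "q \<le> 1/2" using q unfolding q_def s_def .
  define g where "g k = (if k = 0 then 1 else if k = 1 then l * s else 2 * q^k)" for k :: nat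
  have trm: "(\<integral>\<^sup>+x. ennreal ((l * (dotp d a x)^2)^k / fact k) \<partial>D) \<le> ennreal (g k)" for k
  proof -
    have "(\<integral>\<^sup>+x. ennreal ((l * (dotp d a x)^2)^k / fact k) \<partial>D) =
          (\<integral>\<^sup>+x. ennreal (l^k / fact k) * ennreal ((dotp d a x)^(2*k)) \<partial>D)"
      using lp by (intro nn_integral_cong) (simp add: ennreal_mult[symmetric] power_mult_distrib power_mult)
    also have "\<dots> = ennreal (l^k / fact k) * (\<integral>\<^sup>+x. ennreal ((dotp d a x)^(2*k)) \<partial>D)"
      by (rule nn_integral_cmult) simp
    finally have eq: "(\<integral>\<^sup>+x. ennreal ((l * (dotp d a x)^2)^k / fact k) \<partial>D) =
        ennreal (l^k / fact k) * (\<integral>\<^sup>+x. ennreal ((dotp d a x)^(2*k)) \<partial>D)" .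
    consider "k = 0" | "k = 1" | "k \<ge> 2" by linarith
    then show ?thesis
    proof cases
      case 1 then show ?thesis using prob_space.emeasure_space_1[OF PS] unfolding g_def by simp
    next
      case 2 then show ?thesis unfolding eq g_def using nn_sq[of a] lp unfolding s_def
        by (simp add: ennreal_mult'[symmetric])
    next
      case 3
      have "ennreal (l^k / fact k) * (\<integral>\<^sup>+x. ennreal ((dotp d a x)^(2*k)) \<partial>D) \<le>
            ennreal (l^k / fact k) * ennreal (2 * fact k * (exp 1 * c * s)^k)"
        unfolding s_def by (intro mult_left_mono moment sp) auto
      also have "\<dots> = ennreal (2 * q^k)"
        using lp by (simp add: ennreal_mult'[symmetric] q_def power_mult_distrib mult_ac)
      finally show ?thesis unfolding eq g_def using 3 by simp
    qed
  qed
  have gs: "g sums (2/(1-q) - 1 + l * s - 2*q)"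
  proof -
    have "(\<lambda>k. 2 * q^k) sums (2 * (1/(1-q)))" using q0 q1 by (intro sums_mult geometric_sums) simp
    moreover have "(\<lambda>k. if k = 0 then (-1::real) else 0) sums (-1)" using sums_single[of 0 "\<lambda>_. -1::real"] by simp
    moreover have "(\<lambda>k. if k = 1 then l * s - 2 * q else 0) sums (l * s - 2 * q)"
      using sums_single[of 1 "\<lambda>_. l * s - 2 * q"] by simp
    ultimately have "(\<lambda>k. 2 * q^k + (if k = 0 then (-1::real) else 0) + (if k = 1 then l * s - 2 * q else 0))
        sums (2 * (1/(1-q)) + (-1) + (l * s - 2 * q))" by (intro sums_add)
    moreover have "(\<lambda>k. 2 * q^k + (if k = 0 then (-1::real) else 0) + (if k = 1 then l * s - 2 * q else 0)) = g"
      unfolding g_def by (auto simp: fun_eq_iff)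
    ultimately show ?thesis by (simp add: algebra_simps)
  qed
  have g0: "0 \<le> g k" for k unfolding g_def using q0 lp sp s_def by auto
  have "(\<integral>\<^sup>+x. ennreal (exp (l * (dotp d a x)^2)) \<partial>D) =
        (\<integral>\<^sup>+x. (\<Sum>k. ennreal ((l * (dotp d a x)^2)^k / fact k)) \<partial>D)"
    using lp by (intro nn_integral_cong exp_series_ennreal) simp
  also have "\<dots> = (\<Sum>k. (\<integral>\<^sup>+x. ennreal ((l * (dotp d a x)^2)^k / fact k) \<partial>D))"
    by (rule nn_integral_suminf) simp
  also have "\<dots> \<le> (\<Sum>k. ennreal (g k))" by (intro suminf_le trm) auto
  also have "\<dots> = ennreal (\<Sum>k. g k)" using gs g0 by (intro suminf_ennreal2) (auto simp: sums_iff)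
  also have "ennreal (\<Sum>k. g k) \<le> ennreal (1 + l * s + 4 * q^2)"
    using gs geo_bound[OF q0 q1, of "l * s"] by (intro ennreal_leI) (simp add: sums_iff)
  finally show ?thesis unfolding q_def s_def .
qed

lemma c_lower: assumes sp: "bil d Sig a a > 0" shows "1 \<le> 2 * exp 1 * c"
proof -
  have "ennreal (bil d Sig a a) \<le> ennreal (2 * fact 1 * (exp 1 * c * bil d Sig a a)^1)"
    using moment[OF sp, of 1] nn_sq[of a] by simp
  then have "bil d Sig a a \<le> 2 * exp 1 * c * bil d Sig a a"
    using sp cpos by (subst (asm) ennreal_le_iff) (auto simp: mult_ac)
  then show ?thesis using sp by simp
qed

lemma mgf_sq3:
  assumes sp: "bil d Sig a a > 0" and lp: "0 \<le> l" and q: "l * exp 1 * c * bil d Sig a a \<le> 1/2"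
  shows "(\<integral>\<^sup>+x. ennreal (exp (l * (dotp d a x)^2)) \<partial>D) \<le> 3"
proof -
  define s where "s = bil d Sig a a"
  define q where "q = l * exp 1 * c * s"
  have q0: "0 \<le> q" unfolding q_def s_def using lp cpos sp by simp
  have q1: "q \<le> 1/2" using q unfolding q_def s_def .
  have "l * s * 1 \<le> l * s * (2 * exp 1 * c)" using c_lower[OF sp] lp sp s_def by (intro mult_left_mono) auto
  then have ls: "l * s \<le> 2 * q" unfolding q_def by (simp add: mult_ac)
  have "(2*q) * (2*q) \<le> 1 * 1" using q0 q1 by (intro mult_mono) auto
  then have "4 * q^2 \<le> 1" by (simp add: power2_eq_square)
  then have "1 + l * s + 4 * q^2 \<le> 3" using ls q1 by linarith
  then have "ennreal (1 + l * s + 4 * q^2) \<le> ennreal 3" by (rule ennreal_leI)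
  then show ?thesis using mgf_sq[OF sp lp q] unfolding q_def s_def by simp
qed

end

lemma chernoff_prod:
  fixes D :: "'a measure" and g :: "'a \<Rightarrow> real"
  assumes PS: "prob_space D" and g[measurable]: "g \<in> borel_measurable D" and lp: "l > 0"
    and B: "(\<integral>\<^sup>+x. ennreal (exp (l * g x)) \<partial>D) \<le> ennreal B" and B0: "B \<ge> 0"
  shows "emeasure (PiM {..<n} (\<lambda>_. D)) {X \<in> space (PiM {..<n} (\<lambda>_. D)). a \<le> (\<Sum>i<n. g (X i))}
           \<le> ennreal (exp (-l*a) * B^n)"
proof -
  interpret product_prob_space "\<lambda>_. D" by (rule product_prob_spaceI) (rule PS)
  let ?P = "PiM {..<n} (\<lambda>_. D)"
  have mf[measurable]: "(\<lambda>X. \<Sum>i<n. g (X i)) \<in> borel_measurable ?P"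
    by (intro borel_measurable_sum measurable_compose[OF _ g] measurable_component_singleton) auto
  have "emeasure ?P {X \<in> space ?P. a \<le> (\<Sum>i<n. g (X i))} \<le>
     ennreal (exp (-l * a)) * (\<integral>\<^sup>+X. ennreal (exp (l * (\<Sum>i<n. g (X i)))) * indicator (space ?P) X \<partial>?P)"
    by (rule Chernoff_ineq_nn_integral_ge[OF lp]) auto
  also have "(\<integral>\<^sup>+X. ennreal (exp (l * (\<Sum>i<n. g (X i)))) * indicator (space ?P) X \<partial>?P) =
             (\<integral>\<^sup>+X. (\<Prod>i\<in>{..<n}. (\<lambda>i x. ennreal (exp (l * g x))) i (X i)) \<partial>?P)"
    by (intro nn_integral_cong) (simp add: sum_distrib_left exp_sum prod_ennreal)
  also have "\<dots> = (\<Prod>i\<in>{..<n}. (\<integral>\<^sup>+x. ennreal (exp (l * g x)) \<partial>D))"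
    by (rule product_nn_integral_prod) auto
  also have "\<dots> = (\<integral>\<^sup>+x. ennreal (exp (l * g x)) \<partial>D) ^ n" by simp
  also have "\<dots> \<le> (ennreal B) ^ n" by (intro power_mono B) simp
  finally have "emeasure ?P {X \<in> space ?P. a \<le> (\<Sum>i<n. g (X i))} \<le> ennreal (exp (-l * a)) * ennreal B ^ n"
    by (simp add: mult_left_mono)
  also have "\<dots> \<le> ennreal (exp (-l*a) * B^n)"
    using B0 by (simp add: ennreal_mult'[symmetric] ennreal_power)
  finally show ?thesis .
qed


context sgm begin

abbreviation "PP n \<equiv> PiM {..<n} (\<lambda>_. D)"

lemma tail_up:
  assumes sp: "bil d Sig a a > 0" and al: "0 < al" "al \<le> 4 * exp 1 * c"
  shows "emeasure (PP n) {X \<in> space (PP n). real n * (1 + al) * bil d Sig a a \<le> (\<Sum>i<n. (\<lambda>x. (dotp d a x)^2) (X i))}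
          \<le> ennreal (exp (- real n * al^2 / (16 * (exp 1)^2 * c^2)))"
proof -
  define s where "s = bil d Sig a a"
  define E where "E = exp (1::real)"
  have Ep: "E > 0" unfolding E_def by simp
  have sp': "s > 0" using sp s_def by simp
  define l where "l = al / (8 * E^2 * c^2 * s)"
  have lp: "l > 0" unfolding l_def using al cpos sp' Ep by simp
  have qe: "l * E * c * s = al / (8 * E * c)" unfolding l_def using cpos sp' Ep by (simp add: field_simps power2_eq_square)
  have "al / (8*E*c) \<le> 1/2" using al(2) cpos Ep by (simp add: pos_divide_le_eq E_def mult_ac)
  then have q: "l * exp 1 * c * bil d Sig a a \<le> 1/2" using qe unfolding E_def s_def by simp
  define B where "B = 1 + l * s + 4 * (l * E * c * s)^2"
  have mg: "(\<integral>\<^sup>+x. ennreal (exp (l * (dotp d a x)^2)) \<partial>D) \<le> ennreal B"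
    using mgf_sq[OF sp less_imp_le[OF lp] q] unfolding B_def E_def s_def .
  have "emeasure (PP n) {X \<in> space (PP n). real n * (1 + al) * s \<le> (\<Sum>i<n. (\<lambda>x. (dotp d a x)^2) (X i))}
         \<le> ennreal (exp (-l * (real n * (1 + al) * s)) * B^n)"
    by (rule chernoff_prod[OF PS _ lp mg]) (use lp sp' in \<open>simp_all add: B_def\<close>)
  also have "exp (-l * (real n * (1 + al) * s)) * B^n \<le> exp (-l * (real n * (1 + al) * s)) * (exp (l * s + 4 * (l * E * c * s)^2))^n"
  proof -
    have "B \<le> exp (l * s + 4 * (l * E * c * s)^2)"
      unfolding B_def using exp_ge_add_one_self[of "l * s + 4 * (l * E * c * s)^2"] by linarith
    moreover have "0 \<le> B" unfolding B_def using lp sp' by simp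
    ultimately show ?thesis by (intro mult_left_mono power_mono) auto
  qed
  also have "\<dots> = exp (real n * (- l * al * s + 4 * (l * E * c * s)^2))"
    by (simp add: exp_of_nat_mult[symmetric] exp_add[symmetric] algebra_simps)
  also have "- l * al * s + 4 * (l * E * c * s)^2 = - (al^2) / (16 * E^2 * c^2)"
    unfolding qe unfolding l_def using cpos sp' Ep by (simp add: field_simps power2_eq_square)
  finally show ?thesis unfolding s_def E_def by (simp add: ennreal_leI)
qed

lemma mgf_neg:
  assumes sp: "bil d Sig a a > 0" and lp: "0 \<le> l"
  shows "(\<integral>\<^sup>+x. ennreal (exp (l * (- ((dotp d a x)^2)))) \<partial>D) \<le>
      ennreal (1 - l * bil d Sig a a + 2 * l^2 * (exp 1 * c * bil d Sig a a)^2)"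
proof -
  define s where "s = bil d Sig a a"
  let ?X = "(\<integral>\<^sup>+x. ennreal (exp (l * (- ((dotp d a x)^2)))) \<partial>D)"
  have i2: "(\<integral>\<^sup>+x. ennreal (l * (dotp d a x)^2) \<partial>D) = ennreal (l * s)"
  proof -
    have "(\<integral>\<^sup>+x. ennreal (l * (dotp d a x)^2) \<partial>D) = (\<integral>\<^sup>+x. ennreal l * ennreal ((dotp d a x)^2) \<partial>D)"
      using lp by (intro nn_integral_cong) (simp add: ennreal_mult')
    also have "\<dots> = ennreal l * (\<integral>\<^sup>+x. ennreal ((dotp d a x)^2) \<partial>D)" by (rule nn_integral_cmult) simp
    also have "\<dots> = ennreal (l * s)" using nn_sq[of a] lp unfolding s_def by (simp add: ennreal_mult')
    finally show ?thesis .
  qed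
  have "?X + ennreal (l * s) = (\<integral>\<^sup>+x. ennreal (exp (l * (- ((dotp d a x)^2)))) + ennreal (l * (dotp d a x)^2) \<partial>D)"
    unfolding i2[symmetric] by (rule nn_integral_add[symmetric]) auto
  also have "\<dots> \<le> (\<integral>\<^sup>+x. ennreal 1 + ennreal (l^2/2) * ennreal ((dotp d a x)^(2*2)) \<partial>D)"
  proof (intro nn_integral_mono)
    fix x
    have "exp (- (l * (dotp d a x)^2)) + l * (dotp d a x)^2 \<le> 1 + (l * (dotp d a x)^2)^2/2"
      using lp by (intro exp_minus_le_quadratic) simp
    moreover have "(l * (dotp d a x)^2)^2/2 = l^2/2 * (dotp d a x)^(2*2)"
      by (simp add: power_mult_distrib power_mult[symmetric])
    ultimately have r: "exp (l * (- ((dotp d a x)^2))) + l * (dotp d a x)^2 \<le> 1 + l^2/2 * (dotp d a x)^(2*2)" by simp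
    have "ennreal (exp (l * (- ((dotp d a x)^2)))) + ennreal (l * (dotp d a x)^2) =
          ennreal (exp (l * (- ((dotp d a x)^2))) + l * (dotp d a x)^2)"
      using lp by (intro ennreal_plus[symmetric]) auto
    also have "\<dots> \<le> ennreal (1 + l^2/2 * (dotp d a x)^(2*2))" using r by (rule ennreal_leI)
    also have "\<dots> = ennreal 1 + ennreal (l^2/2 * (dotp d a x)^(2*2))" by (intro ennreal_plus) auto
    also have "\<dots> = ennreal 1 + ennreal (l^2/2) * ennreal ((dotp d a x)^(2*2))" by (subst ennreal_mult') auto
    finally show "ennreal (exp (l * (- ((dotp d a x)^2)))) + ennreal (l * (dotp d a x)^2) \<le>
        ennreal 1 + ennreal (l^2/2) * ennreal ((dotp d a x)^(2*2))" .
  qed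
  also have "\<dots> = 1 + ennreal (l^2/2) * (\<integral>\<^sup>+x. ennreal ((dotp d a x)^(2*2)) \<partial>D)"
    using prob_space.emeasure_space_1[OF PS] by (subst nn_integral_add) (auto simp: nn_integral_cmult)
  also have "\<dots> \<le> 1 + ennreal (l^2/2) * ennreal (2 * fact 2 * (exp 1 * c * s)^2)"
    unfolding s_def by (intro add_mono mult_left_mono moment sp) auto
  also have "\<dots> = ennreal 1 + ennreal (l^2/2 * (2 * fact 2 * (exp 1 * c * s)^2))" by (subst ennreal_mult'[of "l^2/2"]) auto
  also have "l^2/2 * (2 * fact 2 * (exp 1 * c * s)^2) = 2 * l^2 * (exp 1 * c * s)^2" by (simp add: fact_numeral)
  also have "ennreal 1 + ennreal (2 * l^2 * (exp 1 * c * s)^2) = ennreal (1 + 2 * l^2 * (exp 1 * c * s)^2)"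
    by (subst ennreal_plus) auto
  finally have h: "?X + ennreal (l * s) \<le> ennreal (1 + 2 * l^2 * (exp 1 * c * s)^2)" .
  have "?X \<le> (\<integral>\<^sup>+x. 1 \<partial>D)" using lp by (intro nn_integral_mono) simp
  then have "?X \<le> 1" using prob_space.emeasure_space_1[OF PS] by simp
  then have "?X < top" using ennreal_one_less_top by (rule le_less_trans)
  then obtain x where x: "?X = ennreal x" "x \<ge> 0" by (auto simp: less_top_ennreal)
  have ls: "l * s \<ge> 0" using lp sp s_def by simp
  have "ennreal (x + l * s) \<le> ennreal (1 + 2 * l^2 * (exp 1 * c * s)^2)"
    using h x ls by (simp add: ennreal_plus[symmetric] del: ennreal_plus)
  then have "x + l * s \<le> 1 + 2 * l^2 * (exp 1 * c * s)^2"
    by (subst (asm) ennreal_le_iff) (auto intro: add_nonneg_nonneg)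
  then show ?thesis using x unfolding s_def by (simp add: ennreal_leI)
qed

lemma tail_low:
  assumes sp: "bil d Sig a a > 0" and al: "0 < al"
  shows "emeasure (PP n) {X \<in> space (PP n). - (real n * (1 - al) * bil d Sig a a) \<le> (\<Sum>i<n. (\<lambda>x. - ((dotp d a x)^2)) (X i))}
          \<le> ennreal (exp (- real n * al^2 / (8 * (exp 1)^2 * c^2)))"
proof -
  define s where "s = bil d Sig a a"
  define E where "E = exp (1::real)"
  have Ep: "E > 0" unfolding E_def by simp
  have sp': "s > 0" using sp s_def by simp
  define l where "l = al / (4 * E^2 * c^2 * s)"
  have lp: "l > 0" unfolding l_def using al cpos sp' Ep by simp
  define B where "B = 1 - l * s + 2 * l^2 * (E * c * s)^2"
  have mg: "(\<integral>\<^sup>+x. ennreal (exp (l * (- ((dotp d a x)^2)))) \<partial>D) \<le> ennreal B"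
    using mgf_neg[OF sp less_imp_le[OF lp]] unfolding B_def E_def s_def .
  have B0: "0 \<le> B" unfolding B_def
  proof -
    have "1 - l * s + l^2 * s^2 / 4 \<ge> 0"
    proof -
      have "1 - l * s + l^2 * s^2 / 4 = (1 - l * s / 2)^2" by (simp add: power2_eq_square algebra_simps)
      then show ?thesis by simp
    qed
    moreover have "2 * l^2 * (E * c * s)^2 \<ge> l^2 * s^2 / 4"
    proof -
      have "1 \<le> 2 * E * c" using c_lower[OF sp] unfolding E_def .
      then have "1 \<le> (2 * E * c)^2" by (simp add: one_le_power)
      then have "l^2 * s^2 * 1 \<le> l^2 * s^2 * (2 * E * c)^2" by (intro mult_left_mono) auto
      then have h: "l^2 * s^2 \<le> 4 * (l^2 * (E * c * s)^2)" by (simp add: power2_eq_square algebra_simps)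
      have "0 \<le> l^2 * (E * c * s)^2" by simp
      moreover have "2 * l^2 * (E * c * s)^2 = 2 * (l^2 * (E * c * s)^2)" by simp
      ultimately show ?thesis using h by linarith
    qed
    ultimately show "0 \<le> 1 - l * s + 2 * l^2 * (E * c * s)^2" by linarith
  qed
  have "emeasure (PP n) {X \<in> space (PP n). - (real n * (1 - al) * s) \<le> (\<Sum>i<n. (\<lambda>x. - ((dotp d a x)^2)) (X i))}
         \<le> ennreal (exp (-l * (- (real n * (1 - al) * s))) * B^n)"
    by (rule chernoff_prod[OF PS _ lp _ B0]) (use mg in simp_all)
  also have "exp (-l * (- (real n * (1 - al) * s))) * B^n \<le> exp (-l * (- (real n * (1 - al) * s))) * (exp (- l * s + 2 * l^2 * (E * c * s)^2))^n"
  proof (intro mult_left_mono power_mono)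
    show "B \<le> exp (- l * s + 2 * l^2 * (E * c * s)^2)" unfolding B_def using exp_ge_add_one_self[of "- l * s + 2 * l^2 * (E * c * s)^2"] by linarith
    show "0 \<le> B" by (rule B0)
  qed simp
  also have "\<dots> = exp (real n * (- l * al * s + 2 * (l * E * c * s)^2))"
    by (simp add: exp_of_nat_mult[symmetric] exp_add[symmetric] algebra_simps power_mult_distrib)
  also have "- l * al * s + 2 * (l * E * c * s)^2 = - (al^2) / (8 * E^2 * c^2)"
    unfolding l_def using cpos sp' Ep by (simp add: field_simps power2_eq_square)
  finally show ?thesis unfolding s_def E_def by (simp add: ennreal_leI)
qed

lemma tail_top:
  assumes sp: "bil d Sig a a > 0" and ep: "0 < eps"
  shows "emeasure (PP n) {X \<in> space (PP n). real n * eps * (12 * exp 1 * c * bil d Sig a a) \<le>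
            (\<Sum>i<n. (\<lambda>x. max 0 ((dotp d a x)^2 - 2 * exp 1 * c * bil d Sig a a * ln (1/eps))) (X i))}
          \<le> ennreal (exp (- 3 * real n * eps))"
proof -
  define s where "s = bil d Sig a a"
  define E where "E = exp (1::real)"
  have Ep: "E > 0" unfolding E_def by simp
  have sp': "s > 0" using sp s_def by simp
  define l where "l = 1 / (2 * E * c * s)"
  have lp: "l > 0" unfolding l_def using cpos sp' Ep by simp
  have q: "l * exp 1 * c * bil d Sig a a \<le> 1/2" unfolding l_def E_def s_def using sp cpos by simp
  define T where "T = 2 * E * c * s * ln (1/eps)"
  have "l * T = ln (1/eps)" unfolding l_def T_def using cpos sp' Ep ep by simp
  then have lT: "exp (- (l * T)) = eps" using ep by (simp add: exp_minus)
  have mg: "(\<integral>\<^sup>+x. ennreal (exp (l * max 0 ((dotp d a x)^2 - T))) \<partial>D) \<le> ennreal (1 + 3 * eps)"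
  proof -
    have "(\<integral>\<^sup>+x. ennreal (exp (l * max 0 ((dotp d a x)^2 - T))) \<partial>D) \<le>
          (\<integral>\<^sup>+x. 1 + ennreal eps * ennreal (exp (l * (dotp d a x)^2)) \<partial>D)"
    proof (intro nn_integral_mono)
      fix x
      have "exp (l * max 0 ((dotp d a x)^2 - T)) \<le> 1 + exp (- (l * T)) * exp (l * (dotp d a x)^2)"
        by (cases "(dotp d a x)^2 - T \<ge> 0") (auto simp: max_def exp_add[symmetric] algebra_simps)
      then have "ennreal (exp (l * max 0 ((dotp d a x)^2 - T))) \<le> ennreal (1 + eps * exp (l * (dotp d a x)^2))"
        unfolding lT by (rule ennreal_leI)
      also have "\<dots> = 1 + ennreal eps * ennreal (exp (l * (dotp d a x)^2))"
        using ep by (subst ennreal_plus) (auto simp: ennreal_mult')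
      finally show "ennreal (exp (l * max 0 ((dotp d a x)^2 - T))) \<le> 1 + ennreal eps * ennreal (exp (l * (dotp d a x)^2))" .
    qed
    also have "\<dots> = 1 + ennreal eps * (\<integral>\<^sup>+x. ennreal (exp (l * (dotp d a x)^2)) \<partial>D)"
      using prob_space.emeasure_space_1[OF PS] by (subst nn_integral_add) (auto simp: nn_integral_cmult)
    also have "\<dots> \<le> 1 + ennreal eps * 3"
      by (intro add_mono mult_left_mono mgf_sq3[OF sp less_imp_le[OF lp] q]) auto
    also have "\<dots> = ennreal (1 + 3 * eps)"
    proof -
      have "ennreal (1 + 3 * eps) = ennreal 1 + ennreal (3 * eps)" using ep by (intro ennreal_plus) auto
      moreover have "ennreal (3 * eps) = 3 * ennreal eps" using ep by (simp add: ennreal_mult)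
      ultimately show ?thesis by (simp add: mult.commute)
    qed
    finally show ?thesis .
  qed
  have "emeasure (PP n) {X \<in> space (PP n). real n * eps * (12 * E * c * s) \<le> (\<Sum>i<n. (\<lambda>x. max 0 ((dotp d a x)^2 - T)) (X i))}
         \<le> ennreal (exp (-l * (real n * eps * (12 * E * c * s))) * (1 + 3 * eps)^n)"
    by (rule chernoff_prod[OF PS _ lp mg]) (use ep in simp_all)
  also have "exp (-l * (real n * eps * (12 * E * c * s))) * (1 + 3 * eps)^n \<le> exp (-l * (real n * eps * (12 * E * c * s))) * (exp (3 * eps))^n"
  proof -
    have "1 + 3 * eps \<le> exp (3 * eps)" by (rule exp_ge_add_one_self)
    then show ?thesis using ep by (intro mult_left_mono power_mono) auto
  qed
  also have "\<dots> = exp (real n * (- l * eps * (12 * E * c * s) + 3 * eps))"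
    by (simp add: exp_of_nat_mult[symmetric] exp_add[symmetric] algebra_simps)
  also have "- l * eps * (12 * E * c * s) + 3 * eps = - 3 * eps"
    unfolding l_def using cpos sp' Ep by (simp add: field_simps)
  finally show ?thesis unfolding s_def E_def T_def by (simp add: ennreal_leI mult_ac)
qed

end

definition norm2 :: "nat \<Rightarrow> (nat \<Rightarrow> real) \<Rightarrow> real" where
  "norm2 r u = (\<Sum>l<r. (u l)^2)"

lemma norm2_nonneg[simp]: "0 \<le> norm2 r u" unfolding norm2_def by (simp add: sum_nonneg)

lemma norm2_zero: "norm2 r x = 0 \<Longrightarrow> l < r \<Longrightarrow> x l = 0"
  unfolding norm2_def by (subst (asm) sum_nonneg_eq_0_iff) auto

lemma norm2_scale: "norm2 r (\<lambda>l. t * a l) = t^2 * norm2 r a"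
  unfolding norm2_def by (simp add: power_mult_distrib sum_distrib_left)

lemma norm2_parallel: "norm2 r (\<lambda>l. a l + b l) + norm2 r (\<lambda>l. a l - b l) = 2 * norm2 r a + 2 * norm2 r b"
  unfolding norm2_def by (simp add: sum.distrib[symmetric] sum_distrib_left power2_eq_square algebra_simps)

lemma norm2_add_le: "norm2 r (\<lambda>l. a l + b l) \<le> 2 * norm2 r a + 2 * norm2 r b"
  using norm2_parallel[of r a b] norm2_nonneg[of r "\<lambda>l. a l - b l"] by linarith

lemma norm2_coord: "norm2 r x \<le> 1 \<Longrightarrow> l < r \<Longrightarrow> \<bar>x l\<bar> \<le> 1"
proof -
  assume "norm2 r x \<le> 1" "l < r"
  then have "(x l)^2 \<le> norm2 r x" unfolding norm2_def by (intro member_le_sum) auto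
  then have "(x l)^2 \<le> 1" using \<open>norm2 r x \<le> 1\<close> by simp
  then show ?thesis by (simp add: abs_square_le_1)
qed

lemma bil_zero_vec: "(\<And>l. l < r \<Longrightarrow> x l = 0) \<Longrightarrow> bil r M x y = 0"
  unfolding bil_def by simp

lemma normalize:
  assumes "norm2 r x > 0"
  shows "norm2 r (\<lambda>l. (1 / sqrt (norm2 r x)) * x l) = 1"
    and "bil r M (\<lambda>l. (1 / sqrt (norm2 r x)) * x l) (\<lambda>l. (1 / sqrt (norm2 r x)) * x l) = bil r M x x / norm2 r x"
proof -
  have sq: "(sqrt (norm2 r x))^2 = norm2 r x" using assms by simp
  show "norm2 r (\<lambda>l. (1 / sqrt (norm2 r x)) * x l) = 1"
    unfolding norm2_scale using assms by (simp add: power_divide)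
  show "bil r M (\<lambda>l. (1 / sqrt (norm2 r x)) * x l) (\<lambda>l. (1 / sqrt (norm2 r x)) * x l) = bil r M x x / norm2 r x"
    unfolding bil_scale_left bil_scale_right using assms
    by (simp add: field_simps)
qed

lemma net_lemma:
  fixes M :: "nat \<Rightarrow> nat \<Rightarrow> real" and N :: "(nat \<Rightarrow> real) set"
  assumes symM: "\<And>l l'. M l l' = M l' l"
    and cover: "\<And>x. norm2 r x = 1 \<Longrightarrow> \<exists>y\<in>N. norm2 r (\<lambda>l. x l - y l) \<le> 1/256 \<and> norm2 r y \<le> 4"
    and hyp: "\<And>y. y \<in> N \<Longrightarrow> \<bar>bil r M y y\<bar> \<le> al * norm2 r y"
    and al0: "al \<ge> 0"
  shows "\<bar>bil r M u u\<bar> \<le> 7 * al * norm2 r u"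
proof -
  have symb: "bil r M a b = bil r M b a" for a b by (rule bil_sym) (rule symM)
  define S where "S = {\<bar>bil r M x x\<bar> | x. norm2 r x \<le> 1}"
  define Bd where "Bd = (\<Sum>l<r. \<Sum>l'<r. \<bar>M l l'\<bar>)"
  have Sbd: "s \<le> Bd" if "s \<in> S" for s
  proof -
    obtain x where x: "s = \<bar>bil r M x x\<bar>" "norm2 r x \<le> 1" using \<open>s \<in> S\<close> unfolding S_def by blast
    have "\<bar>bil r M x x\<bar> \<le> (\<Sum>l<r. \<Sum>l'<r. \<bar>x l * M l l' * x l'\<bar>)"
      unfolding bil_def by (rule order_trans[OF sum_abs]) (intro sum_mono sum_abs)
    also have "\<dots> \<le> Bd" unfolding Bd_def
    proof (intro sum_mono)
      fix l l' assume "l \<in> {..<r}" "l' \<in> {..<r}"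
      then have "\<bar>x l\<bar> \<le> 1" "\<bar>x l'\<bar> \<le> 1" using norm2_coord[OF x(2)] by auto
      then have "\<bar>x l\<bar> * \<bar>x l'\<bar> \<le> 1" by (intro mult_le_one) auto
      then have "(\<bar>x l\<bar> * \<bar>x l'\<bar>) * \<bar>M l l'\<bar> \<le> 1 * \<bar>M l l'\<bar>" by (intro mult_right_mono) auto
      then show "\<bar>x l * M l l' * x l'\<bar> \<le> \<bar>M l l'\<bar>" by (simp add: abs_mult mult_ac)
    qed
    finally show ?thesis using x by simp
  qed
  have S0: "0 \<in> S" unfolding S_def by (rule CollectI, rule exI[of _ "\<lambda>_. 0"]) (simp add: norm2_def bil_def)
  have Sne: "S \<noteq> {}" using S0 by blast
  have bddS: "bdd_above S" using Sbd by (rule bdd_aboveI)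
  define A where "A = Sup S"
  have A1: "\<bar>bil r M x x\<bar> \<le> A" if "norm2 r x \<le> 1" for x
    unfolding A_def using that by (intro cSup_upper bddS) (auto simp: S_def)
  have A0: "A \<ge> 0" using A1[of "\<lambda>_. 0"] by (simp add: norm2_def)
  have homog: "\<bar>bil r M x x\<bar> \<le> A * norm2 r x" for x
  proof (cases "norm2 r x = 0")
    case True
    then show ?thesis using bil_zero_vec[of r x M x] norm2_zero[OF True] by simp
  next
    case False
    then have p: "norm2 r x > 0" using norm2_nonneg[of r x] by linarith
    define x' where "x' = (\<lambda>l. (1 / sqrt (norm2 r x)) * x l)"
    have "\<bar>bil r M x' x'\<bar> \<le> A" using normalize(1)[OF p] unfolding x'_def[symmetric] by (intro A1) simp
    then have "\<bar>bil r M x x / norm2 r x\<bar> \<le> A" using normalize(2)[OF p, of M] unfolding x'_def[symmetric] by simp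
    then show ?thesis using p by (simp add: abs_div pos_divide_le_eq)
  qed
  have polar: "\<bar>bil r M a b\<bar> \<le> A / 2 * (norm2 r a + norm2 r b)" for a b
  proof -
    define P where "P = bil r M (\<lambda>l. a l + b l) (\<lambda>l. a l + b l)"
    define Q where "Q = bil r M (\<lambda>l. a l - b l) (\<lambda>l. a l - b l)"
    have e: "4 * bil r M a b = P - Q"
      unfolding P_def Q_def bil_add_left bil_add_right bil_diff_left bil_diff_right using symb[of a b] by simp
    have t: "\<bar>P - Q\<bar> \<le> \<bar>P\<bar> + \<bar>Q\<bar>" by (rule abs_triangle_ineq4)
    have hP: "\<bar>P\<bar> \<le> A * norm2 r (\<lambda>l. a l + b l)" unfolding P_def by (rule homog)
    have hQ: "\<bar>Q\<bar> \<le> A * norm2 r (\<lambda>l. a l - b l)" unfolding Q_def by (rule homog)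
    have "A * norm2 r (\<lambda>l. a l + b l) + A * norm2 r (\<lambda>l. a l - b l) = A * (2 * norm2 r a + 2 * norm2 r b)"
      by (subst distrib_left[symmetric]) (simp only: norm2_parallel)
    also have "\<dots> = 4 * (A / 2 * (norm2 r a + norm2 r b))" by (simp add: algebra_simps)
    finally have f: "A * norm2 r (\<lambda>l. a l + b l) + A * norm2 r (\<lambda>l. a l - b l) = 4 * (A / 2 * (norm2 r a + norm2 r b))" .
    have "\<bar>4 * bil r M a b\<bar> = 4 * \<bar>bil r M a b\<bar>" by (simp add: abs_mult)
    then show ?thesis using e t hP hQ f by linarith
  qed
  have unit: "\<bar>bil r M x x\<bar> \<le> 4 * al + 11/32 * A" if x1: "norm2 r x = 1" for x
  proof -
    obtain y where y: "y \<in> N" "norm2 r (\<lambda>l. x l - y l) \<le> 1/256" "norm2 r y \<le> 4" using cover[OF x1] by blast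
    have eq: "bil r M x x = bil r M y y + bil r M (\<lambda>l. 4 * (x l - y l)) (\<lambda>l. (1/4) * (x l + y l))"
      unfolding bil_scale_left bil_scale_right bil_diff_left bil_add_right using symb[of x y] by (simp add: field_simps)
    have "\<bar>bil r M (\<lambda>l. 4 * (x l - y l)) (\<lambda>l. (1/4) * (x l + y l))\<bar> \<le>
          A / 2 * (norm2 r (\<lambda>l. 4 * (x l - y l)) + norm2 r (\<lambda>l. (1/4) * (x l + y l)))" by (rule polar)
    also have "norm2 r (\<lambda>l. 4 * (x l - y l)) \<le> 16 / 256" unfolding norm2_scale using y(2) by simp
    also have "norm2 r (\<lambda>l. (1/4) * (x l + y l)) \<le> 10 / 16"
      unfolding norm2_scale using norm2_add_le[of r x y] x1 y(3) by (simp add: power2_eq_square)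
    finally have e2: "\<bar>bil r M (\<lambda>l. 4 * (x l - y l)) (\<lambda>l. (1/4) * (x l + y l))\<bar> \<le> A / 2 * (16/256 + 10/16)"
      using A0 by (simp add: mult_left_mono)
    have "al * norm2 r y \<le> al * 4" using y(3) al0 by (rule mult_left_mono)
    then have e1: "\<bar>bil r M y y\<bar> \<le> 4 * al" using hyp[OF y(1)] by linarith
    have "\<bar>bil r M x x\<bar> \<le> \<bar>bil r M y y\<bar> + \<bar>bil r M (\<lambda>l. 4 * (x l - y l)) (\<lambda>l. (1/4) * (x l + y l))\<bar>"
      unfolding eq by (rule abs_triangle_ineq)
    moreover have "A / 2 * (16/256 + 10/16) = 11/32 * A" by simp
    ultimately show ?thesis using e1 e2 by linarith
  qed
  have ball: "\<bar>bil r M x x\<bar> \<le> 4 * al + 11/32 * A" if "norm2 r x \<le> 1" for x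
  proof (cases "norm2 r x = 0")
    case True
    then show ?thesis using bil_zero_vec[of r x M x] norm2_zero[OF True] A0 al0 by simp
  next
    case False
    then have p: "norm2 r x > 0" using norm2_nonneg[of r x] by linarith
    define x' where "x' = (\<lambda>l. (1 / sqrt (norm2 r x)) * x l)"
    have "\<bar>bil r M x' x'\<bar> \<le> 4 * al + 11/32 * A" using normalize(1)[OF p] unfolding x'_def[symmetric] by (intro unit)
    then have "\<bar>bil r M x x / norm2 r x\<bar> \<le> 4 * al + 11/32 * A" using normalize(2)[OF p, of M] unfolding x'_def[symmetric] by simp
    then have "\<bar>bil r M x x\<bar> \<le> (4 * al + 11/32 * A) * norm2 r x" using p by (simp add: abs_div pos_divide_le_eq)
    also have "\<dots> \<le> (4 * al + 11/32 * A) * 1" using that A0 al0 by (intro mult_left_mono) auto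
    finally show ?thesis by simp
  qed
  have "A \<le> 4 * al + 11/32 * A" unfolding A_def
  proof (rule cSup_least[OF Sne])
    fix z assume "z \<in> S"
    then obtain x where "z = \<bar>bil r M x x\<bar>" "norm2 r x \<le> 1" unfolding S_def by blast
    then show "z \<le> 4 * al + 11/32 * Sup S" using ball[of x] unfolding A_def by simp
  qed
  then have "A \<le> 7 * al" using al0 by linarith
  then have "A * norm2 r u \<le> 7 * al * norm2 r u" by (rule mult_right_mono) simp
  then show ?thesis using homog[of u] by linarith
qed


lemma exp_neg_sq_le: "exp (- ((real m)^2)) \<le> (1/2::real)^m"
proof -
  have "real m \<le> (real m)^2"
  proof (cases "m = 0")
    case False
    then have "real m * 1 \<le> real m * real m" by (intro mult_left_mono) auto
    then show ?thesis by (simp add: power2_eq_square)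
  qed simp
  then have "exp (- ((real m)^2)) \<le> exp (- real m)" by simp
  also have "exp (- real m) = exp (-1) ^ m" by (simp add: exp_of_nat_mult[symmetric])
  also have "exp (-1::real) \<le> 1/2"
  proof -
    have "2 \<le> exp (1::real)" using exp_ge_add_one_self[of 1] by simp
    then show ?thesis by (simp add: exp_minus field_simps)
  qed
  then have "exp (-1::real) ^ m \<le> (1/2) ^ m" by (intro power_mono) auto
  finally show ?thesis .
qed

lemma int_gauss_sum: "(\<Sum>k\<in>{- int N..int N}. exp (- ((real_of_int k)^2))) \<le> 3 - 2 * (1/2::real)^N"
proof (induction N)
  case 0
  then show ?case by simp
next
  case (Suc N)
  have eq: "{- int (Suc N)..int (Suc N)} = insert (int (Suc N)) (insert (- int (Suc N)) {- int N..int N})" by auto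
  have "(\<Sum>k\<in>{- int (Suc N)..int (Suc N)}. exp (- ((real_of_int k)^2))) =
        exp (- ((real (Suc N))^2)) + exp (- ((real (Suc N))^2)) + (\<Sum>k\<in>{- int N..int N}. exp (- ((real_of_int k)^2)))"
  proof -
    have m: "(real_of_int (- int (Suc N)))^2 = (real (Suc N))^2" by (simp only: of_int_minus of_int_of_nat_eq power2_minus)
    have p: "(real_of_int (int (Suc N)))^2 = (real (Suc N))^2" by (simp only: of_int_of_nat_eq)
    show ?thesis unfolding eq by (subst sum.insert, simp, simp, subst sum.insert, simp, simp, simp only: m p add.assoc)
  qed
  also have "\<dots> \<le> (1/2)^(Suc N) + (1/2)^(Suc N) + (3 - 2 * (1/2)^N)"
    using exp_neg_sq_le[of "Suc N"] Suc.IH by linarith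
  also have "\<dots> = 3 - 2 * (1/2::real)^(Suc N)" by simp
  finally show ?case .
qed

definition hstep :: "nat \<Rightarrow> real" where "hstep r = 1 / (8 * sqrt r)"
definition NB :: "nat \<Rightarrow> nat" where "NB r = nat \<lceil>2 / hstep r\<rceil>"
definition emb :: "nat \<Rightarrow> (nat \<Rightarrow> int) \<Rightarrow> nat \<Rightarrow> real" where
  "emb r z = (\<lambda>l. if l < r then hstep r * of_int (z l) else 0)"
definition box :: "nat \<Rightarrow> (nat \<Rightarrow> int) set" where
  "box r = PiE {..<r} (\<lambda>_. {- int (NB r) .. int (NB r)})"
definition net :: "nat \<Rightarrow> (nat \<Rightarrow> real) set" where
  "net r = emb r ` {z \<in> box r. 0 < norm2 r (emb r z) \<and> norm2 r (emb r z) \<le> 4}"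

lemma hstep_pos: "r \<ge> 1 \<Longrightarrow> hstep r > 0" unfolding hstep_def by simp

lemma hstep_sq: "r \<ge> 1 \<Longrightarrow> (hstep r)^2 = 1 / (64 * real r)"
  unfolding hstep_def by (simp add: power_divide power_mult_distrib)

lemma finite_box: "finite (box r)" unfolding box_def by (intro finite_PiE) auto

lemma finite_net: "finite (net r)" unfolding net_def using finite_box by simp

lemma norm2_emb: "norm2 r (emb r z) = (hstep r)^2 * (\<Sum>l<r. (real_of_int (z l))^2)"
  unfolding norm2_def emb_def by (simp add: power_mult_distrib sum_distrib_left)

lemma norm2_sym_diff: "norm2 r (\<lambda>l. y l - x l) = norm2 r (\<lambda>l. x l - y l)"
  unfolding norm2_def by (intro sum.cong) (auto simp: power2_commute)

lemma net_cover:
  assumes x1: "norm2 r x = 1"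
  shows "\<exists>y\<in>net r. norm2 r (\<lambda>l. x l - y l) \<le> 1/256 \<and> norm2 r y \<le> 4"
proof -
  have r1: "r \<ge> 1" using x1 unfolding norm2_def by (cases r) auto
  define h where "h = hstep r"
  have hp: "h > 0" unfolding h_def using hstep_pos[OF r1] .
  have hsq: "h^2 = 1 / (64 * real r)" unfolding h_def using hstep_sq[OF r1] .
  define z where "z = restrict (\<lambda>l. round (x l / h)) {..<r}"
  define y where "y = emb r z"
  have yl: "y l = h * of_int (round (x l / h))" if "l < r" for l
    unfolding y_def emb_def z_def h_def using that by simp
  have err: "(x l - y l)^2 \<le> h^2 / 4" if "l < r" for l
  proof -
    have "\<bar>of_int (round (x l / h)) - x l / h\<bar> \<le> 1/2" by (rule of_int_round_abs_le)
    moreover have "x l - y l = - h * (of_int (round (x l / h)) - x l / h)" unfolding yl[OF that] using hp by (simp add: field_simps)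
    ultimately have "\<bar>x l - y l\<bar> \<le> h * (1/2)" using hp by (simp add: abs_mult mult_left_mono)
    then have "\<bar>x l - y l\<bar> \<le> h / 2" by simp
    then have "\<bar>x l - y l\<bar>^2 \<le> (h/2)^2" by (intro power_mono) auto
    then show ?thesis by (simp add: power_divide)
  qed
  have e1: "norm2 r (\<lambda>l. x l - y l) \<le> 1/256"
  proof -
    have "norm2 r (\<lambda>l. x l - y l) \<le> of_nat (card {..<r}) * (h^2 / 4)"
      unfolding norm2_def by (rule sum_bounded_above) (use err in auto)
    also have "\<dots> = 1/256" using r1 unfolding hsq by simp
    finally show ?thesis .
  qed
  have e2: "norm2 r y \<le> 4"
  proof -
    have "norm2 r (\<lambda>l. x l + (y l - x l)) \<le> 2 * norm2 r x + 2 * norm2 r (\<lambda>l. y l - x l)" by (rule norm2_add_le)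
    then show ?thesis using x1 e1 norm2_sym_diff[of r y x] by simp
  qed
  have e3: "norm2 r y > 0"
  proof -
    have "norm2 r (\<lambda>l. y l + (x l - y l)) \<le> 2 * norm2 r y + 2 * norm2 r (\<lambda>l. x l - y l)" by (rule norm2_add_le)
    then show ?thesis using x1 e1 by simp
  qed
  have zbox: "z \<in> box r"
    unfolding box_def
  proof (rule PiE_I)
    fix l assume l: "l \<in> {..<r}"
    have xl: "\<bar>x l\<bar> \<le> 1" using norm2_coord[of r x l] x1 l by simp
    have "\<bar>real_of_int (round (x l / h))\<bar> \<le> \<bar>x l / h\<bar> + 1/2" using of_int_round_abs_le[of "x l / h"] by linarith
    also have "\<bar>x l / h\<bar> \<le> 1 / h" using xl hp by (simp add: abs_div divide_right_mono)
    also have "1 / h + 1/2 \<le> 2 / h"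
    proof -
      have "h \<le> 1/8" unfolding h_def hstep_def using r1 by (simp add: field_simps)
      then have "1 / h \<ge> 8" using hp by (simp add: field_simps)
      then show ?thesis by simp
    qed
    also have "2 / h \<le> real_of_int (int (NB r))" unfolding NB_def h_def using hp h_def
      by linarith
    finally have "\<bar>round (x l / h)\<bar> \<le> int (NB r)" by linarith
    then show "z l \<in> {- int (NB r)..int (NB r)}" unfolding z_def using l by auto
  next
    fix l assume "l \<notin> {..<r}"
    then show "z l = undefined" unfolding z_def by simp
  qed
  have "y \<in> net r" unfolding net_def y_def using zbox e2 e3 unfolding y_def by blast
  then show ?thesis using e1 e2 by blast
qed

lemma net_card: "real (card (net r)) \<le> (3 * exp 256)^r"
proof -
  define T where "T = {z \<in> box r. 0 < norm2 r (emb r z) \<and> norm2 r (emb r z) \<le> 4}"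
  define N where "N = NB r"
  have fT: "finite T" unfolding T_def using finite_box by simp
  have "card (net r) \<le> card T" unfolding net_def T_def[symmetric] using fT by (rule card_image_le)
  then have c1: "real (card (net r)) \<le> real (card T)" by simp
  show ?thesis
  proof (cases "r = 0")
    case True
    have "T \<subseteq> {z. z \<in> box 0}" using True T_def by auto
    moreover have "box 0 = {\<lambda>_. undefined}" unfolding box_def by simp
    ultimately have "T \<subseteq> {\<lambda>_. undefined}" using True by auto
    then have "card T \<le> card {(\<lambda>_. undefined) :: nat \<Rightarrow> int}" by (rule card_mono[rotated]) simp
    then have "card T \<le> 1" by simp
    then show ?thesis using c1 True by simp
  next
    case False
    then have r1: "r \<ge> 1" by simp
    have hsq: "(hstep r)^2 = 1 / (64 * real r)" using hstep_sq[OF r1] .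
    have bnd: "(\<Sum>l<r. (real_of_int (z l))^2) \<le> 256 * r" if "z \<in> T" for z
    proof -
      have "(hstep r)^2 * (\<Sum>l<r. (real_of_int (z l))^2) \<le> 4" using that unfolding T_def norm2_emb by simp
      then show ?thesis unfolding hsq using r1 by (simp add: field_simps)
    qed
    have "real (card T) = (\<Sum>z\<in>T. 1)" by simp
    also have "\<dots> \<le> (\<Sum>z\<in>T. exp (256 * r - (\<Sum>l<r. (real_of_int (z l))^2)))"
      using bnd by (intro sum_mono) simp
    also have "\<dots> \<le> (\<Sum>z\<in>box r. exp (256 * r - (\<Sum>l<r. (real_of_int (z l))^2)))"
      using finite_box by (intro sum_mono2) (auto simp: T_def)
    also have "\<dots> = (\<Sum>z\<in>box r. exp (256 * r) * (\<Prod>l\<in>{..<r}. exp (- ((real_of_int (z l))^2))))"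
      by (intro sum.cong refl) (simp add: exp_diff exp_sum[symmetric] sum_negf divide_inverse exp_minus[symmetric])
    also have "\<dots> = exp (256 * r) * (\<Prod>l\<in>{..<r}. \<Sum>k\<in>{- int (NB r)..int (NB r)}. exp (- ((real_of_int k)^2)))"
      unfolding box_def sum_distrib_left[symmetric] by (subst prod_sum_PiE) auto
    also have "\<dots> \<le> exp (256 * r) * 3^r"
    proof -
      have "(\<Prod>l\<in>{..<r}. \<Sum>k\<in>{- int (NB r)..int (NB r)}. exp (- ((real_of_int k)^2))) \<le> (\<Prod>l\<in>{..<r}. 3)"
      proof (intro prod_mono conjI)
        show "0 \<le> (\<Sum>k\<in>{- int (NB r)..int (NB r)}. exp (- ((real_of_int k)^2)))" by (intro sum_nonneg) simp
        have "(0::real) \<le> 2 * (1/2)^(NB r)" by simp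
        then show "(\<Sum>k\<in>{- int (NB r)..int (NB r)}. exp (- ((real_of_int k)^2))) \<le> 3"
          using int_gauss_sum[of "NB r"] by linarith
      qed
      then show ?thesis by simp
    qed
    also have "\<dots> = (3 * exp 256)^r" by (simp add: power_mult_distrib exp_of_nat_mult[symmetric] mult.commute)
    finally show ?thesis using c1 by linarith
  qed
qed


lemma qf_add: "quad_form d (\<lambda>j k. A j k + B j k) v = quad_form d A v + quad_form d B v"
  unfolding quad_form_def by (simp add: algebra_simps sum.distrib)

lemma qf_scale: "quad_form d (\<lambda>j k. p * A j k) v = p * quad_form d A v"
  unfolding quad_form_def by (simp add: algebra_simps sum_distrib_left)

lemma qf_sum: "quad_form d (\<lambda>j k. \<Sum>i\<in>I. F i j k) v = (\<Sum>i\<in>I. quad_form d (F i) v)"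
  unfolding quad_form_def by (simp add: sum_distrib_left sum_distrib_right sum.swap[of _ I] mult_ac)

lemma qf_outer: "quad_form d (\<lambda>j k. x j * x k) v = (dotp d v x)^2"
  unfolding quad_form_def dotp_def power2_eq_square sum_product by (intro sum.cong refl) (simp add: mult_ac)

lemma qf_main: "quad_form d (\<lambda>j k. p * A j k + (\<Sum>i<n. w i * (X i j * X i k))) v =
    p * bil d A v v + (\<Sum>i<n. w i * (dotp d v (X i))^2)"
  unfolding qf_add qf_scale qf_sum qf_outer[symmetric] quad_form_bil ..

lemma bil_w: "bil r (\<lambda>l l'. \<Sum>i<n. w i * (Z i l * Z i l')) u u = (\<Sum>i<n. w i * (\<Sum>l<r. u l * Z i l)^2)"
  using qf_main[where d=r and p=0 and A="\<lambda>_ _. 0" and n=n and w=w and X=Z and v=u]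
  unfolding quad_form_bil dotp_def by (simp add: mult_ac)

lemma bil_id: "bil r (\<lambda>l l'. if l = l' then 1 else 0) u u = norm2 r u"
proof -
  have "(\<Sum>k<r. u j * (if j = k then 1 else 0) * u k) = (\<Sum>k<r. if k = j then u j * u k else 0)" for j
    by (intro sum.cong) auto
  then show ?thesis unfolding bil_def norm2_def by (simp add: sum.delta' power2_eq_square)
qed

context sgm begin

definition Sg where "Sg = (\<lambda>j k. if j < d \<and> k < d then Sig j k else 0)"

lemma bil_Sg: "bil d Sg a b = bil d Sig a b"
  unfolding bil_def Sg_def by (intro sum.cong refl) simp

lemma bil_Sig_sym: "bil d Sig a b = bil d Sig b a"
proof -
  have "bil d Sg a b = bil d Sg b a" by (rule bil_sym) (auto simp: Sg_def Sig_sym)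
  then show ?thesis by (simp add: bil_Sg)
qed

lemma GS_Sig: "\<exists>r b. r \<le> d \<and> (\<forall>l<r. \<forall>l'<r. bil d Sig (b l) (b l') = (if l = l' then 1 else 0)) \<and>
   (\<forall>v y. bil d Sig v y = (\<Sum>l<r. bil d Sig v (b l) * bil d Sig (b l) y))"
proof -
  have "\<exists>r b. r \<le> d \<and> (\<forall>l<r. \<forall>l'<r. bil d Sg (b l) (b l') = (if l = l' then 1 else 0)) \<and>
     (\<forall>j<d. \<forall>y. bil d Sg (ev j) y = (\<Sum>l<r. bil d Sg (ev j) (b l) * bil d Sg (b l) y))"
    by (rule gram_schmidt) (auto simp: Sg_def Sig_sym psd bil_Sg[unfolded Sg_def])
  then obtain r b where r: "r \<le> d" and orth: "\<forall>l<r. \<forall>l'<r. bil d Sig (b l) (b l') = (if l = l' then 1 else 0)"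
    and res: "\<forall>j<d. \<forall>y. bil d Sig (ev j) y = (\<Sum>l<r. bil d Sig (ev j) (b l) * bil d Sig (b l) y)"
    unfolding bil_Sg by blast
  have "bil d Sig v y = (\<Sum>l<r. bil d Sig v (b l) * bil d Sig (b l) y)" for v y
  proof -
    have "bil d Sig v y = (\<Sum>j<d. v j * (\<Sum>l<r. bil d Sig (ev j) (b l) * bil d Sig (b l) y))"
      by (subst bil_expand_left) (intro sum.cong refl, simp add: res)
    also have "\<dots> = (\<Sum>l<r. (\<Sum>j<d. v j * bil d Sig (ev j) (b l)) * bil d Sig (b l) y)"
      by (simp add: sum_distrib_left sum_distrib_right sum.swap[of _ "{..<r}"] mult_ac)
    also have "\<dots> = (\<Sum>l<r. bil d Sig v (b l) * bil d Sig (b l) y)"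
      by (simp add: bil_expand_left[symmetric])
    finally show ?thesis .
  qed
  then show ?thesis using r orth by blast
qed

definition kv :: "nat \<Rightarrow> (nat \<Rightarrow> nat \<Rightarrow> real) \<Rightarrow> nat \<Rightarrow> nat \<Rightarrow> real" where
  "kv r b j = (\<lambda>i. ev j i - (\<Sum>l<r. bil d Sig (ev j) (b l) * b l i))"

definition av :: "nat \<Rightarrow> (nat \<Rightarrow> nat \<Rightarrow> real) \<Rightarrow> (nat \<Rightarrow> real) \<Rightarrow> nat \<Rightarrow> real" where
  "av r b u = (\<lambda>i. \<Sum>l<r. u l * b l i)"

lemma dotp_sum: "dotp d (\<lambda>i. \<Sum>l\<in>L. f l i) x = (\<Sum>l\<in>L. dotp d (f l) x)"
  unfolding dotp_def by (simp add: sum_distrib_right sum.swap[of _ L])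

lemma dotp_scale: "dotp d (\<lambda>i. t * a i) x = t * dotp d a x"
  unfolding dotp_def by (simp add: sum_distrib_left mult_ac)

lemma dotp_diff: "dotp d (\<lambda>i. a i - b i) x = dotp d a x - dotp d b x"
  unfolding dotp_def by (simp add: algebra_simps sum_subtractf)

lemma dotp_ev: assumes "j < d" shows "dotp d (ev j) x = x j"
proof -
  have "dotp d (ev j) x = (\<Sum>i<d. if i = j then x i else 0)" unfolding dotp_def ev_def by (intro sum.cong) auto
  then show ?thesis using assms by (simp add: sum.delta)
qed

lemma dotp_expand: "dotp d v x = (\<Sum>j<d. v j * dotp d (ev j) x)"
  unfolding dotp_def by (intro sum.cong refl) (simp add: dotp_ev[unfolded dotp_def])

context
  fixes r :: nat and b :: "nat \<Rightarrow> nat \<Rightarrow> real"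
  assumes orth: "\<forall>l<r. \<forall>l'<r. bil d Sig (b l) (b l') = (if l = l' then 1 else 0)"
    and G1: "\<forall>v y. bil d Sig v y = (\<Sum>l<r. bil d Sig v (b l) * bil d Sig (b l) y)"
begin

lemma kv_null: "bil d Sig (kv r b j) (kv r b j) = 0"
proof -
  have "bil d Sig (kv r b j) (kv r b j) = bil d Sig (ev j) (kv r b j) - (\<Sum>l<r. bil d Sig (ev j) (b l) * bil d Sig (b l) (kv r b j))"
    unfolding kv_def[of r b j] by (simp only: bil_diff_left bil_sum_left bil_scale_left)
  then show ?thesis using G1[rule_format, of "ev j" "kv r b j"] by simp
qed

lemma kv_null_set: "emeasure D {x \<in> space D. dotp d (kv r b j) x \<noteq> 0} = 0"
proof -
  have "(\<integral>\<^sup>+x. ennreal ((dotp d (kv r b j) x)^2) \<partial>D) = 0" using nn_sq[of "kv r b j"] kv_null by simp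
  then have "AE x in D. ennreal ((dotp d (kv r b j) x)^2) = 0" by (subst (asm) nn_integral_0_iff_AE) auto
  then have "AE x in D. dotp d (kv r b j) x = 0" by simp
  then show ?thesis by (subst (asm) AE_iff_measurable[OF _ refl]) auto
qed

lemma decomp:
  assumes k: "\<forall>j<d. dotp d (kv r b j) x = 0"
  shows "dotp d v x = (\<Sum>l<r. bil d Sig v (b l) * dotp d (b l) x)"
proof -
  have kj: "dotp d (ev j) x = (\<Sum>l<r. bil d Sig (ev j) (b l) * dotp d (b l) x)" if "j < d" for j
  proof -
    have "dotp d (kv r b j) x = dotp d (ev j) x - (\<Sum>l<r. bil d Sig (ev j) (b l) * dotp d (b l) x)"
      unfolding kv_def by (simp only: dotp_diff dotp_sum dotp_scale)
    then show ?thesis using k that by simp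
  qed
  have "dotp d v x = (\<Sum>j<d. v j * (\<Sum>l<r. bil d Sig (ev j) (b l) * dotp d (b l) x))"
    by (subst dotp_expand) (intro sum.cong refl, simp add: kj)
  also have "\<dots> = (\<Sum>l<r. (\<Sum>j<d. v j * bil d Sig (ev j) (b l)) * dotp d (b l) x)"
    by (simp add: sum_distrib_left sum_distrib_right sum.swap[of _ "{..<r}"] mult_ac)
  also have "\<dots> = (\<Sum>l<r. bil d Sig v (b l) * dotp d (b l) x)"
    by (simp add: bil_expand_left[symmetric])
  finally show ?thesis .
qed

lemma s_decomp: "bil d Sig v v = norm2 r (\<lambda>l. bil d Sig v (b l))"
proof -
  have "bil d Sig v v = (\<Sum>l<r. bil d Sig v (b l) * bil d Sig (b l) v)" using G1 by blast
  also have "\<dots> = (\<Sum>l<r. (bil d Sig v (b l))^2)"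
    by (intro sum.cong refl) (simp add: power2_eq_square bil_Sig_sym[of "b _" v])
  finally show ?thesis unfolding norm2_def .
qed

lemma av_bil: "bil d Sig (av r b u) (av r b u) = norm2 r u"
proof -
  have "bil d Sig (av r b u) (av r b u) = (\<Sum>l<r. u l * (\<Sum>l'<r. u l' * bil d Sig (b l) (b l')))"
    unfolding av_def by (simp only: bil_sum_left bil_sum_right bil_scale_left bil_scale_right) (simp add: sum_distrib_left)
  also have "\<dots> = (\<Sum>l<r. u l * u l)"
  proof (intro sum.cong refl)
    fix l assume "l \<in> {..<r}"
    then have "(\<Sum>l'<r. u l' * bil d Sig (b l) (b l')) = (\<Sum>l'<r. if l' = l then u l' else 0)"
      using orth by (intro sum.cong) auto
    also have "\<dots> = u l" using \<open>l \<in> {..<r}\<close> by (simp add: sum.delta')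
    finally show "u l * (\<Sum>l'<r. u l' * bil d Sig (b l) (b l')) = u l * u l" by simp
  qed
  finally show ?thesis unfolding norm2_def by (simp add: power2_eq_square)
qed

lemma av_dot: "dotp d (av r b u) x = (\<Sum>l<r. u l * dotp d (b l) x)"
  unfolding av_def by (simp only: dotp_sum dotp_scale)

end
end

lemma meas_sumcomp:
  fixes g :: "'a \<Rightarrow> real"
  assumes g[measurable]: "g \<in> borel_measurable D"
  shows "(\<lambda>X. \<Sum>i<n. g (X i)) \<in> borel_measurable (PiM {..<n} (\<lambda>_. D))"
  by (intro borel_measurable_sum measurable_compose[OF _ g] measurable_component_singleton) auto

lemma measure_le_from_emeasure: "emeasure M A \<le> ennreal p \<Longrightarrow> 0 \<le> p \<Longrightarrow> measure M A \<le> p"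
  unfolding measure_def by (rule enn2real_leI)

lemma lnE_ge: fixes eps :: real assumes "0 < eps" "eps \<le> 1/2" shows "ln (1/eps) \<ge> 2/3"
proof -
  have "2 \<le> 1/eps" using assms by (simp add: field_simps)
  then have "ln 2 \<le> ln (1/eps)" using assms by (subst ln_le_cancel_iff) auto
  then show ?thesis using ln2_ge_two_thirds by linarith
qed

lemma x0_le1: fixes eps :: real assumes "0 < eps" shows "eps * ln (1/eps) \<le> 1"
proof -
  have "ln (1/eps) \<le> 1/eps - 1" using assms by (intro ln_le_minus_one) simp
  then have "eps * ln (1/eps) \<le> eps * (1/eps - 1)" using assms by (intro mult_left_mono) auto
  also have "\<dots> = 1 - eps" using assms by (simp add: field_simps)
  finally show ?thesis using assms by simp
qed

lemma x0_sq: fixes eps :: real assumes "0 < eps" "eps \<le> 1" shows "(eps * ln (1/eps))^2 \<le> 2 * eps"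
proof -
  define y where "y = ln (1/eps)"
  have y0: "y \<ge> 0" unfolding y_def using assms by simp
  have ey: "exp y = 1/eps" unfolding y_def using assms by simp
  have "1 + y + y^2/2 \<le> exp y" using exp_ge_quadratic[OF y0] .
  then have "y^2 \<le> 2 / eps" using y0 ey by simp
  then have "eps * y^2 \<le> eps * (2 / eps)" using assms by (intro mult_left_mono) auto
  then have "eps * y^2 \<le> 2" using assms by simp
  then have "eps * (eps * y^2) \<le> eps * 2" using assms by (intro mult_left_mono) auto
  then show ?thesis unfolding y_def[symmetric] by (simp add: power_mult_distrib power2_eq_square mult_ac)
qed

lemma bil_mat_diff: "bil r (\<lambda>l l'. A l l' - B l l') u u = bil r A u u - bil r B u u"
  unfolding bil_def by (simp add: algebra_simps sum_subtractf)

lemma weighted_bound: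
  fixes w q :: "nat \<Rightarrow> real"
  assumes w0: "\<And>i. i < n \<Longrightarrow> 0 \<le> w i" and wc: "\<And>i. i < n \<Longrightarrow> w i \<le> cap" and ws: "(\<Sum>i<n. w i) = 1"
  shows "(\<Sum>i<n. w i * q i) \<le> T + cap * (\<Sum>i<n. max 0 (q i - T))"
proof -
  have "(\<Sum>i<n. w i * q i) \<le> (\<Sum>i<n. w i * T + cap * max 0 (q i - T))"
  proof (intro sum_mono)
    fix i assume "i \<in> {..<n}"
    then have "w i * q i \<le> w i * (T + max 0 (q i - T))" using w0 by (intro mult_left_mono) auto
    also have "\<dots> = w i * T + w i * max 0 (q i - T)" by (simp add: algebra_simps)
    also have "w i * max 0 (q i - T) \<le> cap * max 0 (q i - T)" using wc \<open>i \<in> {..<n}\<close> by (intro mult_right_mono) auto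
    finally show "w i * q i \<le> w i * T + cap * max 0 (q i - T)" by simp
  qed
  also have "\<dots> = T + cap * (\<Sum>i<n. max 0 (q i - T))"
    using ws by (simp add: sum.distrib sum_distrib_left[symmetric] sum_distrib_right[symmetric])
  finally show ?thesis .
qed


context sgm begin

lemma main_bound:
  fixes eps delta :: real and n :: nat
  assumes eps: "0 < eps" "eps \<le> 1/2" and del: "0 < delta" "delta \<le> 1"
    and nb: "real n \<ge> 262 * (real d + ln (1 / delta)) / (eps * ln (1 / eps))\<^sup>2"
    and dpos: "d > 0"
  shows "\<exists>A \<in> sets (\<Pi>\<^sub>M i\<in>{..<n}. D).
       1 - delta / 2 \<le> measure (\<Pi>\<^sub>M i\<in>{..<n}. D) A \<and>
       (\<forall>X\<in>A.
          (\<forall>v. \<bar>1 / real n * (\<Sum>i<n. (dotp d v (X i))^2) - bil d Sig v v\<bar> \<le> 28 * exp 1 * c * (eps * ln (1/eps)) * bil d Sig v v) \<and>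
          (\<forall>w\<in>weight_set n (1 - eps). \<forall>v. (\<Sum>i<n. w i * (dotp d v (X i))^2) \<le> 182 * exp 1 * c * ln (1/eps) * bil d Sig v v))"
proof -
  obtain r b where r: "r \<le> d" and orth: "\<forall>l<r. \<forall>l'<r. bil d Sig (b l) (b l') = (if l = l' then 1 else 0)"
    and G1: "\<forall>v y. bil d Sig v y = (\<Sum>l<r. bil d Sig v (b l) * bil d Sig (b l) y)"
    using GS_Sig by blast
  let ?P = "PiM {..<n} (\<lambda>_. D)"
  interpret PP: product_prob_space "\<lambda>_. D" "{..<n}" by (rule product_prob_spaceI) (rule PS)
  interpret Pp: prob_space ?P by (rule prob_space_PiM) (rule PS)
  define E where "E = exp (1::real)"
  define lnE where "lnE = ln (1/eps)"
  define x0 where "x0 = eps * lnE"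
  define L where "L = ln (1/delta)"
  have lnE23: "lnE \<ge> 2/3" unfolding lnE_def using lnE_ge eps by blast
  have x0p: "x0 > 0" unfolding x0_def using lnE23 eps by simp
  have x01: "x0 \<le> 1" unfolding x0_def lnE_def using x0_le1 eps by blast
  have x0sq: "x0^2 \<le> 2 * eps" unfolding x0_def lnE_def using x0_sq eps by simp
  have L0: "L \<ge> 0" unfolding L_def using del by simp
  have Ep: "E > 0" unfolding E_def by simp
  have E2: "E \<ge> 2" unfolding E_def using exp_ge_add_one_self[of 1] by simp
  have nb': "262 * (real d + L) / x0^2 \<le> real n" using nb unfolding x0_def lnE_def L_def .
  have "262 * (real d + L) / x0^2 * x0^2 \<le> real n * x0^2" using nb' by (rule mult_right_mono) simp
  moreover have "262 * (real d + L) / x0^2 * x0^2 = 262 * (real d + L)" using x0p by simp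
  ultimately have nx: "real n * x0^2 \<ge> 262 * (real d + L)" by simp
  have np: "n > 0"
  proof -
    have "262 * (real d + L) > 0" using dpos L0 by simp
    then have "real n * x0^2 > 0" using nx by linarith
    then show ?thesis by (cases n) auto
  qed
  define al where "al = 4 * E * c * x0"
  have alp: "al > 0" unfolding al_def using Ep cpos x0p by simp
  have all: "al \<le> 4 * exp 1 * c" unfolding al_def E_def using x01 cpos by simp
  define p0 where "p0 = exp (- (262 * (real d + L)))"
  define a where "a y = av r b y" for y
  have s_a: "bil d Sig (a y) (a y) = norm2 r y" for y unfolding a_def by (rule av_bil[OF orth G1])
  have netpos: "norm2 r y > 0" if "y \<in> net r" for y using that unfolding net_def by auto
  define B1 where "B1 y = {X \<in> space ?P. real n * (1 + al) * bil d Sig (a y) (a y) \<le> (\<Sum>i<n. (\<lambda>x. (dotp d (a y) x)^2) (X i))}" for y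
  define B2 where "B2 y = {X \<in> space ?P. - (real n * (1 - al) * bil d Sig (a y) (a y)) \<le> (\<Sum>i<n. (\<lambda>x. - ((dotp d (a y) x)^2)) (X i))}" for y
  define B3 where "B3 y = {X \<in> space ?P. real n * eps * (12 * exp 1 * c * bil d Sig (a y) (a y)) \<le>
            (\<Sum>i<n. (\<lambda>x. max 0 ((dotp d (a y) x)^2 - 2 * exp 1 * c * bil d Sig (a y) (a y) * ln (1/eps))) (X i))}" for y
  have mB1: "B1 y \<in> sets ?P" for y unfolding B1_def by (intro borel_measurable_le meas_sumcomp) auto
  have mB2: "B2 y \<in> sets ?P" for y unfolding B2_def by (intro borel_measurable_le meas_sumcomp) auto
  have mB3: "B3 y \<in> sets ?P" for y unfolding B3_def by (intro borel_measurable_le meas_sumcomp) auto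
  have pB1: "measure ?P (B1 y) \<le> p0" if "y \<in> net r" for y
  proof -
    have sp: "bil d Sig (a y) (a y) > 0" using netpos[OF that] s_a by simp
    have e: "emeasure ?P (B1 y) \<le> ennreal (exp (- real n * al^2 / (16 * (exp 1)^2 * c^2)))"
      unfolding B1_def by (rule tail_up[OF sp alp all])
    have eq: "- real n * al^2 / (16 * (exp 1)^2 * c^2) = - (real n * x0^2)"
      unfolding al_def E_def using cpos by (simp add: field_simps power2_eq_square)
    have "exp (- (real n * x0^2)) \<le> p0" unfolding p0_def using nx by simp
    then have "exp (- real n * al^2 / (16 * (exp 1)^2 * c^2)) \<le> p0" unfolding eq .
    then have "emeasure ?P (B1 y) \<le> ennreal p0" using e by (meson ennreal_leI order.trans)
    then show ?thesis by (rule measure_le_from_emeasure) (simp add: p0_def)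
  qed
  have pB2: "measure ?P (B2 y) \<le> p0" if "y \<in> net r" for y
  proof -
    have sp: "bil d Sig (a y) (a y) > 0" using netpos[OF that] s_a by simp
    have e: "emeasure ?P (B2 y) \<le> ennreal (exp (- real n * al^2 / (8 * (exp 1)^2 * c^2)))"
      unfolding B2_def by (rule tail_low[OF sp alp])
    have eq: "- real n * al^2 / (8 * (exp 1)^2 * c^2) = - (2 * (real n * x0^2))"
      unfolding al_def E_def using cpos by (simp add: field_simps power2_eq_square)
    have "exp (- (2 * (real n * x0^2))) \<le> p0" unfolding p0_def using nx L0 by simp
    then have "exp (- real n * al^2 / (8 * (exp 1)^2 * c^2)) \<le> p0" unfolding eq .
    then have "emeasure ?P (B2 y) \<le> ennreal p0" using e by (meson ennreal_leI order.trans)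
    then show ?thesis by (rule measure_le_from_emeasure) (simp add: p0_def)
  qed
  have pB3: "measure ?P (B3 y) \<le> p0" if "y \<in> net r" for y
  proof -
    have sp: "bil d Sig (a y) (a y) > 0" using netpos[OF that] s_a by simp
    have e: "emeasure ?P (B3 y) \<le> ennreal (exp (- 3 * real n * eps))"
      unfolding B3_def by (rule tail_top[OF sp eps(1)])
    have "exp (- 3 * real n * eps) \<le> p0"
    proof -
      have "real n * x0^2 \<le> real n * (3 * eps)" using x0sq eps by (intro mult_left_mono) auto
      then show ?thesis unfolding p0_def using nx by simp
    qed
    then have "emeasure ?P (B3 y) \<le> ennreal p0" using e by (meson ennreal_leI order.trans)
    then show ?thesis by (rule measure_le_from_emeasure) (simp add: p0_def)
  qed
  define Bad where "Bad y = B1 y \<union> B2 y \<union> B3 y" for y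
  have mBad: "Bad y \<in> sets ?P" for y unfolding Bad_def using mB1 mB2 mB3 by auto
  have pBad: "measure ?P (Bad y) \<le> 3 * p0" if "y \<in> net r" for y
  proof -
    have "measure ?P (Bad y) \<le> measure ?P (B1 y \<union> B2 y) + measure ?P (B3 y)"
      unfolding Bad_def using mB1 mB2 mB3 by (intro measure_Un_le) auto
    also have "\<dots> \<le> measure ?P (B1 y) + measure ?P (B2 y) + measure ?P (B3 y)"
      using mB1 mB2 by (simp add: measure_Un_le)
    finally show ?thesis using pB1[OF that] pB2[OF that] pB3[OF that] by linarith
  qed
  define U1 where "U1 = (\<Union>y\<in>net r. Bad y)"
  have mU1: "U1 \<in> sets ?P" unfolding U1_def using mBad finite_net by auto
  have pU1: "measure ?P U1 \<le> real (card (net r)) * (3 * p0)"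
  proof -
    have "measure ?P U1 \<le> (\<Sum>y\<in>net r. measure ?P (Bad y))"
      unfolding U1_def using mBad finite_net by (intro PP.P.finite_measure_subadditive_finite) auto
    also have "\<dots> \<le> real (card (net r)) * (3 * p0)" using pBad by (rule sum_bounded_above)
    finally show ?thesis .
  qed
  define Z0 where "Z0 j = {x \<in> space D. dotp d (kv r b j) x \<noteq> 0}" for j
  have mZ0: "Z0 j \<in> sets D" for j unfolding Z0_def by measurable
  have eZ0: "emeasure D (Z0 j) = 0" for j unfolding Z0_def by (rule kv_null_set[OF orth G1])
  define B0 where "B0 ij = {X \<in> space ?P. X (fst ij) \<in> Z0 (snd ij)}" for ij
  have eB0: "emeasure ?P (B0 ij) = 0" if "ij \<in> {..<n} \<times> {..<d}" for ij
    unfolding B0_def using that mZ0 eZ0 by (subst PP.emeasure_PiM_Collect_single) auto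
  have mB0: "B0 ij \<in> sets ?P" if "ij \<in> {..<n} \<times> {..<d}" for ij
  proof -
    have "B0 ij = (\<lambda>X. X (fst ij)) -` Z0 (snd ij) \<inter> space ?P" unfolding B0_def by auto
    also have "\<dots> \<in> sets ?P"
    proof (rule measurable_sets[OF _ mZ0])
      show "(\<lambda>X. X (fst ij)) \<in> ?P \<rightarrow>\<^sub>M D"
        using measurable_component_singleton[of "fst ij" "{..<n}" "\<lambda>_. D"] that by auto
    qed
    finally show ?thesis .
  qed
  define U0 where "U0 = (\<Union>ij\<in>{..<n} \<times> {..<d}. B0 ij)"
  have mU0: "U0 \<in> sets ?P" unfolding U0_def using mB0 by auto
  have pU0: "measure ?P U0 \<le> 0"
  proof -
    have "measure ?P U0 \<le> (\<Sum>ij\<in>{..<n} \<times> {..<d}. measure ?P (B0 ij))"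
      unfolding U0_def using mB0 by (intro PP.P.finite_measure_subadditive_finite) auto
    also have "\<dots> = 0" using eB0 by (intro sum.neutral) (simp add: measure_def)
    finally show ?thesis .
  qed
  define A where "A = space ?P - (U0 \<union> U1)"
  have mA: "A \<in> sets ?P" unfolding A_def using mU0 mU1 by auto
  have num: "real (card (net r)) * (3 * p0) \<le> delta / 2"
  proof -
    have "real (card (net r)) \<le> (3 * exp 256)^r" by (rule net_card)
    also have "(3 * exp 256)^r \<le> (exp (258::real))^r"
    proof -
      have "3 \<le> exp (2::real)" using exp_ge_quadratic[of 2] by simp
      then have "3 * exp 256 \<le> exp 2 * exp (256::real)" by simp
      also have "\<dots> = exp 258" by (simp add: exp_add[symmetric])
      finally show ?thesis by (intro power_mono) auto
    qed
    also have "\<dots> = exp (258 * real r)" by (simp add: exp_of_nat_mult[symmetric] mult.commute)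
    also have "\<dots> \<le> exp (258 * real d)" using r by simp
    finally have c1: "real (card (net r)) \<le> exp (258 * real d)" .
    have "real (card (net r)) * (3 * p0) \<le> exp (258 * real d) * (3 * p0)"
      using c1 unfolding p0_def by (intro mult_right_mono) auto
    also have "\<dots> = 3 * exp (- 4 * real d - 262 * L)" unfolding p0_def by (simp add: exp_add[symmetric] algebra_simps)
    also have "\<dots> \<le> 3 * exp (- 4 - L)" using dpos L0 by simp
    also have "\<dots> = 3 * exp (-4) * delta" unfolding L_def using del by (simp add: exp_diff exp_minus)
    also have "\<dots> \<le> 3 * (1/16) * delta"
    proof -
      have "exp (4::real) = exp 2 * exp 2" by (simp add: exp_add[symmetric])
      moreover have "exp (2::real) \<ge> 4" using exp_ge_quadratic[of 2] by simp
      moreover have "(4::real) * 4 \<le> exp 2 * exp 2" using \<open>exp (2::real) \<ge> 4\<close> by (intro mult_mono) auto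
      ultimately have "exp (4::real) \<ge> 16" by simp
      then have "exp (-4::real) \<le> 1/16" by (simp add: exp_minus field_simps)
      then show ?thesis using del by (intro mult_right_mono) auto
    qed
    finally have "real (card (net r)) * (3 * p0) \<le> 3 * (1/16) * delta" .
    then show ?thesis using del by linarith
  qed
  have pA: "1 - delta / 2 \<le> measure ?P A"
  proof -
    have "measure ?P A = 1 - measure ?P (U0 \<union> U1)" unfolding A_def using mU0 mU1 by (intro PP.P.prob_compl) auto
    moreover have "measure ?P (U0 \<union> U1) \<le> measure ?P U0 + measure ?P U1" using mU0 mU1 by (rule measure_Un_le)
    ultimately show ?thesis using pU0 pU1 num by linarith
  qed
  have det: "\<forall>X\<in>A.
          (\<forall>v. \<bar>1 / real n * (\<Sum>i<n. (dotp d v (X i))^2) - bil d Sig v v\<bar> \<le> 28 * exp 1 * c * (eps * ln (1/eps)) * bil d Sig v v) \<and>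
          (\<forall>w\<in>weight_set n (1 - eps). \<forall>v. (\<Sum>i<n. w i * (dotp d v (X i))^2) \<le> 182 * exp 1 * c * ln (1/eps) * bil d Sig v v)"
  proof
    fix X assume XA: "X \<in> A"
    have Xsp: "X \<in> space ?P" using XA unfolding A_def by auto
    have Xi: "X i \<in> space D" if "i < n" for i using Xsp that by (auto simp: space_PiM PiE_iff)
    have kv0: "\<forall>j<d. dotp d (kv r b j) (X i) = 0" if "i < n" for i
    proof (intro allI impI)
      fix j assume j: "j < d"
      have "X \<notin> B0 (i, j)" using XA that j unfolding A_def U0_def by auto
      then show "dotp d (kv r b j) (X i) = 0" using Xsp Xi[OF that] unfolding B0_def Z0_def by auto
    qed
    have nB: "X \<notin> B1 y" "X \<notin> B2 y" "X \<notin> B3 y" if "y \<in> net r" for y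
      using XA that unfolding A_def U1_def Bad_def by auto
    define Zm where "Zm i l = dotp d (b l) (X i)" for i l
    define uv where "uv v = (\<lambda>l. bil d Sig v (b l))" for v
    have dec: "dotp d v (X i) = (\<Sum>l<r. uv v l * Zm i l)" if "i < n" for v i
      unfolding uv_def Zm_def by (rule decomp[OF orth G1 kv0[OF that]])
    have sdec: "bil d Sig v v = norm2 r (uv v)" for v unfolding uv_def by (rule s_decomp[OF orth G1])
    have adot: "dotp d (a y) (X i) = (\<Sum>l<r. y l * Zm i l)" for y i unfolding a_def Zm_def by (rule av_dot[OF orth G1])
    define M1 where "M1 l l' = (\<Sum>i<n. (1/real n) * (Zm i l * Zm i l')) - (if l = l' then 1 else 0)" for l l'
    have bM1: "bil r M1 u u = (\<Sum>i<n. (1/real n) * (\<Sum>l<r. u l * Zm i l)^2) - norm2 r u" for u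
      unfolding M1_def by (simp only: bil_mat_diff bil_w bil_id)
    have symM1: "M1 l l' = M1 l' l" for l l' unfolding M1_def by (simp add: mult.commute)
    have hyp1: "\<bar>bil r M1 y y\<bar> \<le> al * norm2 r y" if "y \<in> net r" for y
    proof -
      define Q where "Q = (\<Sum>i<n. (\<Sum>l<r. y l * Zm i l)^2)"
      define s where "s = norm2 r y"
      have q1: "Q < real n * (1 + al) * s" using nB(1)[OF that] Xsp unfolding B1_def Q_def s_def by (auto simp: s_a adot)
      have "\<not> (- (real n * (1 - al) * s) \<le> (\<Sum>i<n. - ((\<Sum>l<r. y l * Zm i l)^2)))"
        using nB(2)[OF that] Xsp unfolding B2_def s_def by (auto simp: s_a adot)
      then have q2: "Q > real n * (1 - al) * s" unfolding Q_def by (simp add: sum_negf)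
      have e: "bil r M1 y y = Q / real n - s" unfolding bM1 Q_def s_def
        by (simp add: sum_distrib_left[symmetric] divide_inverse mult.commute)
      have npos: "real n > 0" using np by simp
      have "Q / real n < (1 + al) * s" using q1 npos by (simp add: pos_divide_less_eq mult_ac)
      moreover have "Q / real n > (1 - al) * s" using q2 npos by (simp add: pos_less_divide_eq mult_ac)
      ultimately show ?thesis unfolding e s_def[symmetric] by (simp add: algebra_simps abs_le_iff)
    qed
    have net1: "\<bar>bil r M1 u u\<bar> \<le> 7 * al * norm2 r u" for u
      by (rule net_lemma[OF symM1 net_cover hyp1]) (use alp in auto)
    have part1: "\<forall>v. \<bar>1 / real n * (\<Sum>i<n. (dotp d v (X i))^2) - bil d Sig v v\<bar> \<le> 28 * exp 1 * c * (eps * ln (1/eps)) * bil d Sig v v"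
    proof
      fix v
      have "1 / real n * (\<Sum>i<n. (dotp d v (X i))^2) - bil d Sig v v = bil r M1 (uv v) (uv v)"
        unfolding bM1 sdec[of v] sum_distrib_left by (intro arg_cong2[where f = minus] sum.cong refl) (simp add: dec)
      then show "\<bar>1 / real n * (\<Sum>i<n. (dotp d v (X i))^2) - bil d Sig v v\<bar> \<le> 28 * exp 1 * c * (eps * ln (1/eps)) * bil d Sig v v"
        using net1[of "uv v"] unfolding sdec[of v] al_def x0_def lnE_def E_def by (simp add: mult_ac)
    qed
    have part2: "\<forall>w\<in>weight_set n (1 - eps). \<forall>v. (\<Sum>i<n. w i * (dotp d v (X i))^2) \<le> 182 * exp 1 * c * ln (1/eps) * bil d Sig v v"
    proof (intro ballI allI)
      fix w v assume w: "w \<in> weight_set n (1 - eps)"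
      have w0: "\<And>i. i < n \<Longrightarrow> 0 \<le> w i" and wc: "\<And>i. i < n \<Longrightarrow> w i \<le> 1 / (real n * eps)" and ws: "(\<Sum>i<n. w i) = 1"
        using w unfolding weight_set_def by auto
      define M2 where "M2 l l' = (\<Sum>i<n. w i * (Zm i l * Zm i l'))" for l l'
      have bM2: "bil r M2 u u = (\<Sum>i<n. w i * (\<Sum>l<r. u l * Zm i l)^2)" for u unfolding M2_def by (rule bil_w)
      have symM2: "M2 l l' = M2 l' l" for l l' unfolding M2_def by (simp add: mult.commute)
      define al2 where "al2 = 26 * E * c * lnE"
      have al20: "al2 \<ge> 0" unfolding al2_def using Ep cpos lnE23 by simp
      have hyp2: "\<bar>bil r M2 y y\<bar> \<le> al2 * norm2 r y" if "y \<in> net r" for y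
      proof -
        define s where "s = norm2 r y"
        have s0: "s \<ge> 0" unfolding s_def by simp
        define T where "T = 2 * exp 1 * c * s * ln (1/eps)"
        define q where "q i = (\<Sum>l<r. y l * Zm i l)^2" for i
        have B3n: "(\<Sum>i<n. max 0 (q i - T)) < real n * eps * (12 * exp 1 * c * s)"
          using nB(3)[OF that] Xsp unfolding B3_def q_def T_def s_def by (auto simp: s_a adot)
        have a1: "(\<Sum>i<n. w i * q i) \<le> T + 1 / (real n * eps) * (\<Sum>i<n. max 0 (q i - T))"
          by (rule weighted_bound[OF w0 wc ws])
        have a2: "1 / (real n * eps) * (\<Sum>i<n. max 0 (q i - T)) \<le> 1 / (real n * eps) * (real n * eps * (12 * exp 1 * c * s))"
          using B3n eps np by (intro mult_left_mono) auto
        have a3: "1 / (real n * eps) * (real n * eps * (12 * exp 1 * c * s)) = 12 * exp 1 * c * s"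
          using eps np by simp
        have a4: "T + 12 * exp 1 * c * s \<le> al2 * s"
        proof -
          have "12 * (E * c * s) \<le> 24 * lnE * (E * c * s)" using lnE23 Ep cpos s0 by (intro mult_right_mono) auto
          then show ?thesis unfolding T_def al2_def lnE_def E_def by (simp add: algebra_simps)
        qed
        have le: "(\<Sum>i<n. w i * q i) \<le> al2 * s" using a1 a2 a3 a4 by linarith
        have "0 \<le> (\<Sum>i<n. w i * q i)" using w0 unfolding q_def by (intro sum_nonneg) auto
        then show ?thesis using le unfolding bM2 q_def s_def by simp
      qed
      have net2: "\<bar>bil r M2 u u\<bar> \<le> 7 * al2 * norm2 r u" for u
        by (rule net_lemma[OF symM2 net_cover hyp2 al20])
      have "(\<Sum>i<n. w i * (dotp d v (X i))^2) = bil r M2 (uv v) (uv v)"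
        unfolding bM2 by (intro sum.cong refl) (simp add: dec)
      also have "\<dots> \<le> 7 * al2 * norm2 r (uv v)" using net2[of "uv v"] by simp
      also have "\<dots> = 182 * exp 1 * c * ln (1/eps) * bil d Sig v v" unfolding sdec[of v] al2_def lnE_def E_def by simp
      finally show "(\<Sum>i<n. w i * (dotp d v (X i))^2) \<le> 182 * exp 1 * c * ln (1/eps) * bil d Sig v v" .
    qed
    show "(\<forall>v. \<bar>1 / real n * (\<Sum>i<n. (dotp d v (X i))^2) - bil d Sig v v\<bar> \<le> 28 * exp 1 * c * (eps * ln (1/eps)) * bil d Sig v v) \<and>
          (\<forall>w\<in>weight_set n (1 - eps). \<forall>v. (\<Sum>i<n. w i * (dotp d v (X i))^2) \<le> 182 * exp 1 * c * ln (1/eps) * bil d Sig v v)"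
      using part1 part2 by blast
  qed
  show ?thesis using mA pA det by blast
qed

end

theorem lemma11:
  fixes c :: real
  assumes "c > 0"
  shows "\<exists>K>0. \<exists>C4>0. \<forall>(d::nat) (D::(nat \<Rightarrow> real) measure) \<Sigma> \<Gamma> (\<epsilon>::real) (\<delta>::real) (n::nat).
    subgauss_model c d D \<Sigma> \<Gamma> \<and> 0 < \<epsilon> \<and> \<epsilon> \<le> 1/2 \<and> 0 < \<delta> \<and> \<delta> \<le> 1 \<and>
    real n \<ge> K * (real d + ln (1 / \<delta>)) / (\<epsilon> * ln (1 / \<epsilon>))\<^sup>2 \<longrightarrow>
    (\<exists>A \<in> sets (\<Pi>\<^sub>M i\<in>{..<n}. D).
       1 - \<delta> / 2 \<le> measure (\<Pi>\<^sub>M i\<in>{..<n}. D) A \<and>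
       (\<forall>X\<in>A.
          loewner_le d
            (\<lambda>j k. (1 / real n) * (\<Sum>i<n. X i j * X i k) - \<Sigma> j k)
            (\<lambda>j k. C4 * \<epsilon> * ln (1 / \<epsilon>) * \<Sigma> j k) \<and>
          loewner_le d
            (\<lambda>j k. - (C4 * \<epsilon> * ln (1 / \<epsilon>) * \<Sigma> j k))
            (\<lambda>j k. (1 / real n) * (\<Sum>i<n. X i j * X i k) - \<Sigma> j k) \<and>
          (\<forall>w\<in>weight_set n (1 - \<epsilon>).
             loewner_le d
               (\<lambda>j k. \<Sum>i<n. w i * (X i j * X i k - \<Sigma> j k))
               (\<lambda>j k. C4 * ln (1 / \<epsilon>) * \<Sigma> j k) \<and>
             loewner_le d
               (\<lambda>j k. - (C4 * ln (1 / \<epsilon>) * \<Sigma> j k))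
               (\<lambda>j k. \<Sum>i<n. w i * (X i j * X i k - \<Sigma> j k)))))"
proof -
  define C4 where "C4 = 182 * exp 1 * c + 2"
  have C4p: "C4 > 0" unfolding C4_def using assms by (simp add: add_pos_pos)
  have main: "\<exists>A \<in> sets (\<Pi>\<^sub>M i\<in>{..<n}. D).
       1 - \<delta> / 2 \<le> measure (\<Pi>\<^sub>M i\<in>{..<n}. D) A \<and>
       (\<forall>X\<in>A.
          loewner_le d
            (\<lambda>j k. (1 / real n) * (\<Sum>i<n. X i j * X i k) - \<Sigma> j k)
            (\<lambda>j k. C4 * \<epsilon> * ln (1 / \<epsilon>) * \<Sigma> j k) \<and>
          loewner_le d
            (\<lambda>j k. - (C4 * \<epsilon> * ln (1 / \<epsilon>) * \<Sigma> j k))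
            (\<lambda>j k. (1 / real n) * (\<Sum>i<n. X i j * X i k) - \<Sigma> j k) \<and>
          (\<forall>w\<in>weight_set n (1 - \<epsilon>).
             loewner_le d
               (\<lambda>j k. \<Sum>i<n. w i * (X i j * X i k - \<Sigma> j k))
               (\<lambda>j k. C4 * ln (1 / \<epsilon>) * \<Sigma> j k) \<and>
             loewner_le d
               (\<lambda>j k. - (C4 * ln (1 / \<epsilon>) * \<Sigma> j k))
               (\<lambda>j k. \<Sum>i<n. w i * (X i j * X i k - \<Sigma> j k))))"
    if H: "subgauss_model c d D \<Sigma> \<Gamma> \<and> 0 < \<epsilon> \<and> \<epsilon> \<le> 1/2 \<and> 0 < \<delta> \<and> \<delta> \<le> 1 \<and>
      real n \<ge> 262 * (real d + ln (1 / \<delta>)) / (\<epsilon> * ln (1 / \<epsilon>))\<^sup>2"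
    for d D \<Sigma> \<Gamma> \<epsilon> \<delta> n
  proof -
    have sm: "subgauss_model c d D \<Sigma> \<Gamma>" and eps: "0 < \<epsilon>" "\<epsilon> \<le> 1/2" and del: "0 < \<delta>" "\<delta> \<le> 1"
      and nb: "real n \<ge> 262 * (real d + ln (1 / \<delta>)) / (\<epsilon> * ln (1 / \<epsilon>))\<^sup>2" using H by auto
    interpret sgm c d D \<Sigma> \<Gamma> using sm assms by unfold_locales
    let ?P = "\<Pi>\<^sub>M i\<in>{..<n}. D"
    show ?thesis
    proof (cases "d = 0")
      case True
      interpret Pp: prob_space ?P by (rule prob_space_PiM) (rule PS)
      show ?thesis
        using del by (intro bexI[of _ "space ?P"]) (auto simp: True loewner_le_def quad_form_def Pp.prob_space)
    next
      case False
      then have dpos: "d > 0" by simp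
      obtain A where mA: "A \<in> sets ?P" and pA: "1 - \<delta> / 2 \<le> measure ?P A"
        and det: "\<forall>X\<in>A.
          (\<forall>v. \<bar>1 / real n * (\<Sum>i<n. (dotp d v (X i))^2) - bil d \<Sigma> v v\<bar> \<le> 28 * exp 1 * c * (\<epsilon> * ln (1/\<epsilon>)) * bil d \<Sigma> v v) \<and>
          (\<forall>w\<in>weight_set n (1 - \<epsilon>). \<forall>v. (\<Sum>i<n. w i * (dotp d v (X i))^2) \<le> 182 * exp 1 * c * ln (1/\<epsilon>) * bil d \<Sigma> v v)"
        using main_bound[OF eps del nb dpos] by blast
      define x0 where "x0 = \<epsilon> * ln (1/\<epsilon>)"
      define lnE where "lnE = ln (1/\<epsilon>)"
      have lnE23: "lnE \<ge> 2/3" unfolding lnE_def using lnE_ge eps by blast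
      have x0p: "x0 > 0" unfolding x0_def using lnE23 eps unfolding lnE_def by simp
      have Ec: "0 \<le> exp 1 * c" using assms by simp
      have c28: "28 * exp 1 * c \<le> C4" unfolding C4_def using assms by simp
      have c182: "182 * exp 1 * c \<le> C4" unfolding C4_def by simp
      have C4ln: "C4 * lnE \<ge> 1"
      proof -
        have "C4 \<ge> 2" unfolding C4_def using Ec by (simp add: mult_ac)
        then have "C4 * lnE \<ge> 2 * (2/3)" using lnE23 by (intro mult_mono) auto
        then show ?thesis by simp
      qed
      have "\<forall>X\<in>A.
          loewner_le d
            (\<lambda>j k. (1 / real n) * (\<Sum>i<n. X i j * X i k) - \<Sigma> j k)
            (\<lambda>j k. C4 * \<epsilon> * ln (1 / \<epsilon>) * \<Sigma> j k) \<and>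
          loewner_le d
            (\<lambda>j k. - (C4 * \<epsilon> * ln (1 / \<epsilon>) * \<Sigma> j k))
            (\<lambda>j k. (1 / real n) * (\<Sum>i<n. X i j * X i k) - \<Sigma> j k) \<and>
          (\<forall>w\<in>weight_set n (1 - \<epsilon>).
             loewner_le d
               (\<lambda>j k. \<Sum>i<n. w i * (X i j * X i k - \<Sigma> j k))
               (\<lambda>j k. C4 * ln (1 / \<epsilon>) * \<Sigma> j k) \<and>
             loewner_le d
               (\<lambda>j k. - (C4 * ln (1 / \<epsilon>) * \<Sigma> j k))
               (\<lambda>j k. \<Sum>i<n. w i * (X i j * X i k - \<Sigma> j k)))"
      proof
        fix X assume XA: "X \<in> A"
        have p1: "\<bar>1 / real n * (\<Sum>i<n. (dotp d v (X i))^2) - bil d \<Sigma> v v\<bar> \<le> 28 * exp 1 * c * x0 * bil d \<Sigma> v v" for v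
          using det XA unfolding x0_def by auto
        have p2: "(\<Sum>i<n. w i * (dotp d v (X i))^2) \<le> 182 * exp 1 * c * lnE * bil d \<Sigma> v v"
          if "w \<in> weight_set n (1 - \<epsilon>)" for w v
          using det XA that unfolding lnE_def by auto
        have S0: "0 \<le> bil d \<Sigma> v v" for v by (rule psd)
        have b1: "28 * exp 1 * c * x0 * bil d \<Sigma> v v \<le> C4 * x0 * bil d \<Sigma> v v" for v
          using c28 x0p S0[of v] by (intro mult_right_mono) auto
        have b2: "182 * exp 1 * c * lnE * bil d \<Sigma> v v \<le> C4 * lnE * bil d \<Sigma> v v" for v
          using c182 lnE23 S0[of v] by (intro mult_right_mono) auto
        define R where "R v = (\<Sum>i<n. (1 / real n) * (dotp d v (X i))^2)" for v
        have R_eq: "R v = 1 / real n * (\<Sum>i<n. (dotp d v (X i))^2)" for v unfolding R_def by (simp add: sum_distrib_left)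
        show "loewner_le d
            (\<lambda>j k. (1 / real n) * (\<Sum>i<n. X i j * X i k) - \<Sigma> j k)
            (\<lambda>j k. C4 * \<epsilon> * ln (1 / \<epsilon>) * \<Sigma> j k) \<and>
          loewner_le d
            (\<lambda>j k. - (C4 * \<epsilon> * ln (1 / \<epsilon>) * \<Sigma> j k))
            (\<lambda>j k. (1 / real n) * (\<Sum>i<n. X i j * X i k) - \<Sigma> j k) \<and>
          (\<forall>w\<in>weight_set n (1 - \<epsilon>).
             loewner_le d
               (\<lambda>j k. \<Sum>i<n. w i * (X i j * X i k - \<Sigma> j k))
               (\<lambda>j k. C4 * ln (1 / \<epsilon>) * \<Sigma> j k) \<and>
             loewner_le d
               (\<lambda>j k. - (C4 * ln (1 / \<epsilon>) * \<Sigma> j k))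
               (\<lambda>j k. \<Sum>i<n. w i * (X i j * X i k - \<Sigma> j k)))"
        proof (intro conjI ballI)
          show "loewner_le d (\<lambda>j k. (1 / real n) * (\<Sum>i<n. X i j * X i k) - \<Sigma> j k) (\<lambda>j k. C4 * \<epsilon> * ln (1 / \<epsilon>) * \<Sigma> j k)"
            unfolding loewner_le_def
          proof
            fix v
            have eq: "(\<lambda>j k. C4 * \<epsilon> * ln (1 / \<epsilon>) * \<Sigma> j k - ((1 / real n) * (\<Sum>i<n. X i j * X i k) - \<Sigma> j k)) =
                  (\<lambda>j k. (C4 * x0 + 1) * \<Sigma> j k + (\<Sum>i<n. (- (1 / real n)) * (X i j * X i k)))"
              unfolding x0_def by (intro ext) (simp add: algebra_simps sum_distrib_left sum_negf)
            have "quad_form d (\<lambda>j k. C4 * \<epsilon> * ln (1 / \<epsilon>) * \<Sigma> j k - ((1 / real n) * (\<Sum>i<n. X i j * X i k) - \<Sigma> j k)) v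
                = (C4 * x0 + 1) * bil d \<Sigma> v v - R v"
              unfolding eq qf_main R_def by (simp add: sum_negf)
            moreover have "R v - bil d \<Sigma> v v \<le> C4 * x0 * bil d \<Sigma> v v" using p1[of v] b1[of v] unfolding R_eq by linarith
            ultimately show "0 \<le> quad_form d (\<lambda>j k. C4 * \<epsilon> * ln (1 / \<epsilon>) * \<Sigma> j k - ((1 / real n) * (\<Sum>i<n. X i j * X i k) - \<Sigma> j k)) v"
              by (simp add: algebra_simps)
          qed
          show "loewner_le d (\<lambda>j k. - (C4 * \<epsilon> * ln (1 / \<epsilon>) * \<Sigma> j k)) (\<lambda>j k. (1 / real n) * (\<Sum>i<n. X i j * X i k) - \<Sigma> j k)"
            unfolding loewner_le_def
          proof
            fix v
            have eq: "(\<lambda>j k. ((1 / real n) * (\<Sum>i<n. X i j * X i k) - \<Sigma> j k) - - (C4 * \<epsilon> * ln (1 / \<epsilon>) * \<Sigma> j k)) =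
                  (\<lambda>j k. (C4 * x0 - 1) * \<Sigma> j k + (\<Sum>i<n. (1 / real n) * (X i j * X i k)))"
              unfolding x0_def by (intro ext) (simp add: algebra_simps sum_distrib_left)
            have "quad_form d (\<lambda>j k. ((1 / real n) * (\<Sum>i<n. X i j * X i k) - \<Sigma> j k) - - (C4 * \<epsilon> * ln (1 / \<epsilon>) * \<Sigma> j k)) v
                = (C4 * x0 - 1) * bil d \<Sigma> v v + R v"
              unfolding eq qf_main R_def by simp
            moreover have "bil d \<Sigma> v v - R v \<le> C4 * x0 * bil d \<Sigma> v v" using p1[of v] b1[of v] unfolding R_eq by linarith
            ultimately show "0 \<le> quad_form d (\<lambda>j k. ((1 / real n) * (\<Sum>i<n. X i j * X i k) - \<Sigma> j k) - - (C4 * \<epsilon> * ln (1 / \<epsilon>) * \<Sigma> j k)) v"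
              by (simp add: algebra_simps)
          qed
          fix w assume w: "w \<in> weight_set n (1 - \<epsilon>)"
          have w0: "\<And>i. i < n \<Longrightarrow> 0 \<le> w i" and ws: "(\<Sum>i<n. w i) = 1" using w unfolding weight_set_def by auto
          define W where "W v = (\<Sum>i<n. w i * (dotp d v (X i))^2)" for v
          have W0: "W v \<ge> 0" for v unfolding W_def using w0 by (intro sum_nonneg) auto
          show "loewner_le d (\<lambda>j k. \<Sum>i<n. w i * (X i j * X i k - \<Sigma> j k)) (\<lambda>j k. C4 * ln (1 / \<epsilon>) * \<Sigma> j k)"
            unfolding loewner_le_def
          proof
            fix v
            have eq: "(\<lambda>j k. C4 * ln (1 / \<epsilon>) * \<Sigma> j k - (\<Sum>i<n. w i * (X i j * X i k - \<Sigma> j k))) =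
                  (\<lambda>j k. (C4 * lnE + 1) * \<Sigma> j k + (\<Sum>i<n. (- w i) * (X i j * X i k)))"
              unfolding lnE_def by (intro ext) (simp add: algebra_simps sum_subtractf sum_distrib_right[symmetric] ws sum_negf)
            have "quad_form d (\<lambda>j k. C4 * ln (1 / \<epsilon>) * \<Sigma> j k - (\<Sum>i<n. w i * (X i j * X i k - \<Sigma> j k))) v
                = (C4 * lnE + 1) * bil d \<Sigma> v v - W v"
              unfolding eq qf_main W_def by (simp add: sum_negf)
            moreover have "W v \<le> C4 * lnE * bil d \<Sigma> v v" using p2[OF w, of v] b2[of v] unfolding W_def by linarith
            ultimately show "0 \<le> quad_form d (\<lambda>j k. C4 * ln (1 / \<epsilon>) * \<Sigma> j k - (\<Sum>i<n. w i * (X i j * X i k - \<Sigma> j k))) v"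
              using S0[of v] by (simp add: algebra_simps)
          qed
          show "loewner_le d (\<lambda>j k. - (C4 * ln (1 / \<epsilon>) * \<Sigma> j k)) (\<lambda>j k. \<Sum>i<n. w i * (X i j * X i k - \<Sigma> j k))"
            unfolding loewner_le_def
          proof
            fix v
            have eq: "(\<lambda>j k. (\<Sum>i<n. w i * (X i j * X i k - \<Sigma> j k)) - - (C4 * ln (1 / \<epsilon>) * \<Sigma> j k)) =
                  (\<lambda>j k. (C4 * lnE - 1) * \<Sigma> j k + (\<Sum>i<n. w i * (X i j * X i k)))"
              unfolding lnE_def by (intro ext) (simp add: algebra_simps sum_subtractf sum_distrib_right[symmetric] ws)
            have "quad_form d (\<lambda>j k. (\<Sum>i<n. w i * (X i j * X i k - \<Sigma> j k)) - - (C4 * ln (1 / \<epsilon>) * \<Sigma> j k)) v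
                = (C4 * lnE - 1) * bil d \<Sigma> v v + W v"
              unfolding eq qf_main W_def by simp
            moreover have "0 \<le> (C4 * lnE - 1) * bil d \<Sigma> v v" using C4ln S0[of v] by simp
            ultimately show "0 \<le> quad_form d (\<lambda>j k. (\<Sum>i<n. w i * (X i j * X i k - \<Sigma> j k)) - - (C4 * ln (1 / \<epsilon>) * \<Sigma> j k)) v"
              using W0[of v] by simp
          qed
        qed
      qed
      then show ?thesis using mA pA by blast
    qed
  qed
  show ?thesis
    apply (rule exI[of _ "262::real"])
    apply (rule conjI, simp)
    apply (rule exI[of _ C4])
    apply (rule conjI, rule C4p)
    using main by blast
qed


end
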